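(* Let $m\ge 1$, let $(n_1,a_1),\dots,(n_{m-1},a_{m-1})$ be pairwise distinct elements of $\mathbb{N}\times\mathbb{D}$, and let $B_1,\dots,B_{m-1}$ be the Gram–Schmidt orthonormalization of $e_{n_1,a_1},\dots,e_{n_{m-1},a_{m-1}}$. Let $Q$ denote the orthogonal projection of $H^2(\mathbb{D})$ onto the orthogonal complement of $\mathrm{span}\{B_1,\dots,B_{m-1}\}$, and for $(n,a)\in\mathbb{N}\times\mathbb{D}$ not among $(n_1,a_1),\dots,(n_{m-1},a_{m-1})$ put $$B_m^{(n,a)}=\frac{Q\,e_{n,a}}{\|Q\,e_{n,a}\|}=\frac{e_{n,a}-\sum_{l=1}^{m-1}\langle e_{n,a},B_l\rangle B_l}{\left\|e_{n,a}-\sum_{l=1}^{m-1}\langle e_{n,a},B_l\rangle B_l\right\|}.$$ Then for every $f\in H^2(\mathbb{D})$: (i) $|\langle f,B_m^{(n,a)}\rangle|\to 0$ as $|a|\to 1$ or $n\to\infty$; and (ii) there exists a pair $(n_m,a_m)\in\mathbb{N}\times\mathbb{D}$, not among $(n_1,a_1),\dots,(n_{m-1},a_{m-1})$, such that $$|\langle f,B_m^{(n_m,a_m)}\rangle|=\sup\{|\langle f,B_m^{(n,a)}\rangle|:(n,a)\in\mathbb{N}\times\mathbb{D}\setminus\{(n_1,a_1),\dots,(n_{m-1},a_{m-1})\}\}.$$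
   Context: $\mathbb{D}$ is the open unit disc; $H^2(\mathbb{D})$ the Hardy space with inner product $\langle f,g\rangle=\frac{1}{2\pi}\int_0^{2\pi}f(e^{it})\overline{g(e^{it})}\,dt$. For $n\in\mathbb{N}=\{0,1,\dots\}$ and $a\in\mathbb{D}$, $k_{n,a}(z)=\left(\frac{\partial}{\partial\overline{a}}\right)^n\frac{1}{1-\overline{a}z}=\frac{n!\,z^n}{(1-\overline{a}z)^{n+1}}$ and $e_{n,a}=k_{n,a}/\|k_{n,a}\|$; distinct pairs give linearly independent functions, so $Q e_{n,a}\neq 0$ for pairs not among the given ones. *)

theory Defs
  imports "HOL-Complex_Analysis.Complex_Analysis"
begin

text \<open>Hardy space H^2 of the unit disc, realised via Taylor coefficients at 0.
  An element is a function holomorphic on the open unit disc whose Taylor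
  coefficients are square-summable; the inner product
  (1/2pi) int f(e^it) conj(g(e^it)) dt equals the coefficient inner product.\<close>

definition taylor_coeff :: "(complex \<Rightarrow> complex) \<Rightarrow> nat \<Rightarrow> complex" where
  "taylor_coeff f k = (deriv ^^ k) f 0 / of_nat (fact k)"

definition H2 :: "(complex \<Rightarrow> complex) set" where
  "H2 = {f. f holomorphic_on ball 0 1 \<and> summable (\<lambda>k. (cmod (taylor_coeff f k))\<^sup>2)}"

definition h2_inner :: "(complex \<Rightarrow> complex) \<Rightarrow> (complex \<Rightarrow> complex) \<Rightarrow> complex" where
  "h2_inner f g = (\<Sum>k. taylor_coeff f k * cnj (taylor_coeff g k))"

definition h2_norm :: "(complex \<Rightarrow> complex) \<Rightarrow> real" where
  "h2_norm f = sqrt (Re (h2_inner f f))"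

definition kern :: "nat \<Rightarrow> complex \<Rightarrow> complex \<Rightarrow> complex" where
  "kern n a = (\<lambda>z. of_nat (fact n) * z ^ n / (1 - cnj a * z) ^ (n + 1))"

definition ekern :: "nat \<Rightarrow> complex \<Rightarrow> complex \<Rightarrow> complex" where
  "ekern n a = (\<lambda>z. kern n a z / of_real (h2_norm (kern n a)))"

definition proj_perp :: "(complex \<Rightarrow> complex) list \<Rightarrow> (complex \<Rightarrow> complex) \<Rightarrow> complex \<Rightarrow> complex" where
  "proj_perp Bs g = (\<lambda>z. g z - (\<Sum>B\<leftarrow>Bs. h2_inner g B * B z))"

definition h2_normalize :: "(complex \<Rightarrow> complex) \<Rightarrow> complex \<Rightarrow> complex" where
  "h2_normalize g = (\<lambda>z. g z / of_real (h2_norm g))"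

text \<open>Gram--Schmidt; gs_rev works on the reversed list (last element first).\<close>

fun gs_rev :: "(nat \<times> complex) list \<Rightarrow> (complex \<Rightarrow> complex) list" where
  "gs_rev [] = []"
| "gs_rev (p # ps) =
     (let Bs = gs_rev ps in h2_normalize (proj_perp Bs (ekern (fst p) (snd p))) # Bs)"

definition gram_schmidt :: "(nat \<times> complex) list \<Rightarrow> (complex \<Rightarrow> complex) list" where
  "gram_schmidt ps = rev (gs_rev (rev ps))"

definition Bm :: "(nat \<times> complex) list \<Rightarrow> nat \<Rightarrow> complex \<Rightarrow> complex \<Rightarrow> complex" where
  "Bm ps n a = h2_normalize (proj_perp (gram_schmidt ps) (ekern n a))"

end

theory Submission
  imports Defs "HOL-Analysis.L2_Norm"
begin
lemma tc_unique:
  assumes r: "r > 0" and S: "\<And>z. z \<in> ball 0 r \<Longrightarrow> (\<lambda>k. c k * z^k) sums f z"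
  shows "taylor_coeff f k = c k"
proof -
  define F where "F = Abs_fps c"
  have "ereal (r/2) \<le> fps_conv_radius F"
  proof -
    have "summable (\<lambda>n. c n * (of_real (r/2))^n)"
      using S[of "of_real (r/2)"] r by (auto simp: sums_iff)
    from conv_radius_geI[OF this] r show ?thesis
      by (simp add: F_def fps_conv_radius_def)
  qed
  hence pos: "fps_conv_radius F > 0" using r
    by (metis ereal_less(2) half_gt_zero order_less_le_trans)
  have "eventually (\<lambda>z. z \<in> ball 0 r) (nhds (0::complex))"
    using r by (intro eventually_nhds_in_open) auto
  hence "eventually (\<lambda>z. eval_fps F z = f z) (nhds 0)"
    by eventually_elim (use S in \<open>auto simp: eval_fps_def F_def sums_iff\<close>)
  hence "f has_fps_expansion F" using pos by (simp add: has_fps_expansion_def)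
  from fps_nth_fps_expansion[OF this, of k] show ?thesis
    by (simp add: taylor_coeff_def F_def)
qed

abbreviation hol :: "(complex \<Rightarrow> complex) \<Rightarrow> bool" where
  "hol f \<equiv> f holomorphic_on ball 0 1"

lemma H2_hol: "f \<in> H2 \<Longrightarrow> hol f" by (simp add: H2_def)
lemma H2_summ: "f \<in> H2 \<Longrightarrow> summable (\<lambda>k. (cmod (taylor_coeff f k))\<^sup>2)" by (simp add: H2_def)

lemma holo_big_H2:
  assumes R: "R > 1" and h: "f holomorphic_on ball 0 R"
  shows "f \<in> H2"
proof -
  define \<rho> where "\<rho> = (1 + R) / 2"
  have \<rho>: "1 < \<rho>" "\<rho> < R" using R by (auto simp: \<rho>_def)
  have "(\<lambda>n. (deriv ^^ n) f 0 / fact n * (of_real \<rho> - 0)^n) sums f (of_real \<rho>)"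
    by (rule holomorphic_power_series[OF h]) (use \<rho> in auto)
  hence "(\<lambda>n. taylor_coeff f n * (of_real \<rho>)^n) \<longlonglongrightarrow> 0"
    by (intro summable_LIMSEQ_zero) (auto simp: sums_iff taylor_coeff_def)
  hence ev: "eventually (\<lambda>n. norm (taylor_coeff f n * (of_real \<rho>)^n) < 1) sequentially"
    by (rule order_tendstoD(2)[OF tendsto_norm_zero]) simp
  have "summable (\<lambda>n. (cmod (taylor_coeff f n))\<^sup>2)"
  proof (rule summable_comparison_test_ev)
    show "summable (\<lambda>n. (1 / \<rho>^2) ^ n)"
      using \<rho> by (intro summable_geometric) (auto simp: power_less_one_iff)
    show "eventually (\<lambda>n. norm ((cmod (taylor_coeff f n))\<^sup>2) \<le> (1 / \<rho>^2) ^ n) sequentially"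
      using ev
    proof eventually_elim
      case (elim n)
      have "cmod (taylor_coeff f n) * \<rho>^n < 1" using elim \<rho>
        by (simp add: norm_mult norm_power)
      hence "cmod (taylor_coeff f n) \<le> 1 / \<rho>^n" using \<rho>
        by (simp add: field_simps)
      hence "(cmod (taylor_coeff f n))\<^sup>2 \<le> (1 / \<rho>^n)^2"
        by (intro power_mono) auto
      thus ?case by (simp add: power_mult_distrib power_divide power_mult[symmetric] mult.commute)
    qed
  qed
  moreover have "hol f" using h by (rule holomorphic_on_subset) (use R in auto)
  ultimately show ?thesis by (simp add: H2_def)
qed

lemma tc_add: "hol f \<Longrightarrow> hol g \<Longrightarrow> taylor_coeff (\<lambda>z. f z + g z) k = taylor_coeff f k + taylor_coeff g k"
  unfolding taylor_coeff_def by (subst higher_deriv_add[of f "ball 0 1" g]) (auto simp: add_divide_distrib)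

lemma tc_diff: "hol f \<Longrightarrow> hol g \<Longrightarrow> taylor_coeff (\<lambda>z. f z - g z) k = taylor_coeff f k - taylor_coeff g k"
  unfolding taylor_coeff_def by (subst higher_deriv_diff[of f "ball 0 1" g]) (auto simp: diff_divide_distrib)

lemma tc_cmult: "hol f \<Longrightarrow> taylor_coeff (\<lambda>z. c * f z) k = c * taylor_coeff f k"
  unfolding taylor_coeff_def by (subst higher_deriv_cmult[of f "ball 0 1"]) auto

lemma tc_cdiv: "hol f \<Longrightarrow> taylor_coeff (\<lambda>z. f z / c) k = taylor_coeff f k / c"
  using tc_cmult[of f "inverse c" k] by (simp add: field_simps)

lemma hol_sum_list: "(\<And>B. B \<in> set Bs \<Longrightarrow> hol B) \<Longrightarrow> hol (\<lambda>z. \<Sum>B\<leftarrow>Bs. c B * B z)"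
  by (induction Bs) (auto intro!: holomorphic_intros)

lemma tc_sum_list: "(\<And>B. B \<in> set Bs \<Longrightarrow> hol B) \<Longrightarrow>
   taylor_coeff (\<lambda>z. \<Sum>B\<leftarrow>Bs. c B * B z) k = (\<Sum>B\<leftarrow>Bs. c B * taylor_coeff B k)"
proof (induction Bs)
  case Nil
  then show ?case by (simp add: taylor_coeff_def higher_deriv_const)
next
  case (Cons B Bs)
  have "taylor_coeff (\<lambda>z. \<Sum>B\<leftarrow>B#Bs. c B * B z) k
      = taylor_coeff (\<lambda>z. c B * B z + (\<Sum>B\<leftarrow>Bs. c B * B z)) k" by simp
  also have "\<dots> = c B * taylor_coeff B k + taylor_coeff (\<lambda>z. \<Sum>B\<leftarrow>Bs. c B * B z) k"
    using Cons.prems by (subst tc_add) (auto intro!: holomorphic_intros hol_sum_list tc_cmult)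
  finally show ?case using Cons by simp
qed

lemma summable_sq_add:
  fixes a b :: "nat \<Rightarrow> complex"
  assumes "summable (\<lambda>k. (cmod (a k))\<^sup>2)" "summable (\<lambda>k. (cmod (b k))\<^sup>2)"
  shows "summable (\<lambda>k. (cmod (a k + b k))\<^sup>2)"
proof (rule summable_comparison_test[OF _ summable_add[OF summable_mult[OF assms(1), of 2] summable_mult[OF assms(2), of 2]]])
  show "\<exists>N. \<forall>n\<ge>N. norm ((cmod (a n + b n))\<^sup>2) \<le> 2 * (cmod (a n))\<^sup>2 + 2 * (cmod (b n))\<^sup>2"
  proof (intro exI allI impI)
    fix n
    have "cmod (a n + b n) \<le> cmod (a n) + cmod (b n)" by (rule norm_triangle_ineq)
    hence "(cmod (a n + b n))\<^sup>2 \<le> (cmod (a n) + cmod (b n))\<^sup>2" by (intro power_mono) auto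
    also have "\<dots> \<le> 2 * (cmod (a n))\<^sup>2 + 2 * (cmod (b n))\<^sup>2"
      using zero_le_power2[of "cmod (a n) - cmod (b n)"] by (simp add: power2_eq_square algebra_simps)
    finally show "norm ((cmod (a n + b n))\<^sup>2) \<le> 2 * (cmod (a n))\<^sup>2 + 2 * (cmod (b n))\<^sup>2" by simp
  qed
qed

lemma H2_add: "f \<in> H2 \<Longrightarrow> g \<in> H2 \<Longrightarrow> (\<lambda>z. f z + g z) \<in> H2"
  unfolding H2_def by (auto intro!: holomorphic_intros simp: tc_add summable_sq_add)

lemma H2_cmult: "f \<in> H2 \<Longrightarrow> (\<lambda>z. c * f z) \<in> H2"
  unfolding H2_def by (auto intro!: holomorphic_intros summable_mult simp: tc_cmult norm_mult power_mult_distrib)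

lemma H2_uminus: "f \<in> H2 \<Longrightarrow> (\<lambda>z. - f z) \<in> H2"
  using H2_cmult[of f "-1"] by simp

lemma H2_diff: "f \<in> H2 \<Longrightarrow> g \<in> H2 \<Longrightarrow> (\<lambda>z. f z - g z) \<in> H2"
  using H2_add[of f "\<lambda>z. - g z"] H2_uminus[of g] by simp

lemma H2_cdiv: "f \<in> H2 \<Longrightarrow> (\<lambda>z. f z / c) \<in> H2"
  using H2_cmult[of f "inverse c"] by (simp add: field_simps)

lemma H2_sum_list: "(\<And>B. B \<in> set Bs \<Longrightarrow> B \<in> H2) \<Longrightarrow> (\<lambda>z. \<Sum>B\<leftarrow>Bs. c B * B z) \<in> H2"
proof (induction Bs)
  case Nil
  have "(\<lambda>z::complex. 0::complex) \<in> H2"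
    by (rule holo_big_H2[of 2]) auto
  then show ?case by simp
next
  case (Cons B Bs)
  then show ?case using H2_add[OF H2_cmult[of B "c B"], of "\<lambda>z. \<Sum>B\<leftarrow>Bs. c B * B z"] by simp
qed

lemma summable_inner_norm:
  assumes "f \<in> H2" "g \<in> H2"
  shows "summable (\<lambda>k. cmod (taylor_coeff f k * cnj (taylor_coeff g k)))"
proof (rule summable_comparison_test[OF _ summable_add[OF H2_summ[OF assms(1)] H2_summ[OF assms(2)]]])
  show "\<exists>N. \<forall>n\<ge>N. norm (cmod (taylor_coeff f n * cnj (taylor_coeff g n))) \<le>
          (cmod (taylor_coeff f n))\<^sup>2 + (cmod (taylor_coeff g n))\<^sup>2"
  proof (intro exI allI impI)
    fix n
    show "norm (cmod (taylor_coeff f n * cnj (taylor_coeff g n))) \<le>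
          (cmod (taylor_coeff f n))\<^sup>2 + (cmod (taylor_coeff g n))\<^sup>2"
    proof -
      let ?x = "cmod (taylor_coeff f n)" and ?y = "cmod (taylor_coeff g n)"
      have h1: "2 * (?x * ?y) \<le> ?x * ?x + ?y * ?y"
        using zero_le_power2[of "?x - ?y"] by (simp add: power2_eq_square algebra_simps)
      have h2: "0 \<le> ?x * ?y" by simp
      from h1 h2 have "?x * ?y \<le> ?x * ?x + ?y * ?y" by linarith
      thus ?thesis by (simp add: norm_mult power2_eq_square)
    qed
  qed
qed

lemma summable_inner: "f \<in> H2 \<Longrightarrow> g \<in> H2 \<Longrightarrow> summable (\<lambda>k. taylor_coeff f k * cnj (taylor_coeff g k))"
  by (rule summable_norm_cancel[OF summable_inner_norm])

lemma inner_add_left: assumes "f \<in> H2" "g \<in> H2" "h \<in> H2" shows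
   "h2_inner (\<lambda>z. f z + g z) h = h2_inner f h + h2_inner g h"
proof -
  have "h2_inner (\<lambda>z. f z + g z) h = (\<Sum>k. taylor_coeff f k * cnj (taylor_coeff h k) + taylor_coeff g k * cnj (taylor_coeff h k))"
    unfolding h2_inner_def using tc_add[OF H2_hol[OF assms(1)] H2_hol[OF assms(2)]] by (simp only: distrib_right)
  also have "\<dots> = h2_inner f h + h2_inner g h"
    unfolding h2_inner_def by (rule suminf_add[symmetric, OF summable_inner[OF assms(1,3)] summable_inner[OF assms(2,3)]])
  finally show ?thesis .
qed

lemma inner_diff_left: assumes "f \<in> H2" "g \<in> H2" "h \<in> H2" shows
   "h2_inner (\<lambda>z. f z - g z) h = h2_inner f h - h2_inner g h"
proof -
  have "h2_inner (\<lambda>z. f z - g z) h = (\<Sum>k. taylor_coeff f k * cnj (taylor_coeff h k) - taylor_coeff g k * cnj (taylor_coeff h k))"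
    unfolding h2_inner_def using tc_diff[OF H2_hol[OF assms(1)] H2_hol[OF assms(2)]] by (simp only: left_diff_distrib)
  also have "\<dots> = h2_inner f h - h2_inner g h"
    unfolding h2_inner_def by (rule suminf_diff[symmetric, OF summable_inner[OF assms(1,3)] summable_inner[OF assms(2,3)]])
  finally show ?thesis .
qed

lemma inner_cmult_left: assumes "f \<in> H2" "h \<in> H2" shows
   "h2_inner (\<lambda>z. c * f z) h = c * h2_inner f h"
proof -
  have "h2_inner (\<lambda>z. c * f z) h = (\<Sum>k. c * (taylor_coeff f k * cnj (taylor_coeff h k)))"
    unfolding h2_inner_def using tc_cmult[OF H2_hol[OF assms(1)]] by (simp only: mult.assoc)
  also have "\<dots> = c * h2_inner f h"
    unfolding h2_inner_def by (rule suminf_mult[OF summable_inner[OF assms]])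
  finally show ?thesis .
qed

lemma inner_cdiv_left: "f \<in> H2 \<Longrightarrow> h \<in> H2 \<Longrightarrow>
   h2_inner (\<lambda>z. f z / c) h = h2_inner f h / c"
  using inner_cmult_left[of f h "inverse c"] by (simp add: field_simps)

lemma inner_zero_fun_left: "h2_inner (\<lambda>z. 0) h = 0"
  by (simp add: h2_inner_def taylor_coeff_def higher_deriv_const)

lemma inner_sum_list_left: "(\<And>B. B \<in> set Bs \<Longrightarrow> B \<in> H2) \<Longrightarrow> h \<in> H2 \<Longrightarrow>
   h2_inner (\<lambda>z. \<Sum>B\<leftarrow>Bs. c B * B z) h = (\<Sum>B\<leftarrow>Bs. c B * h2_inner B h)"
proof (induction Bs)
  case Nil
  then show ?case by (simp add: inner_zero_fun_left)
next
  case (Cons B Bs)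
  have "h2_inner (\<lambda>z. \<Sum>B\<leftarrow>B#Bs. c B * B z) h = h2_inner (\<lambda>z. c B * B z + (\<Sum>B\<leftarrow>Bs. c B * B z)) h"
    by simp
  also have "\<dots> = h2_inner (\<lambda>z. c B * B z) h + h2_inner (\<lambda>z. \<Sum>B\<leftarrow>Bs. c B * B z) h"
    using Cons.prems by (intro inner_add_left H2_cmult H2_sum_list) auto
  also have "\<dots> = c B * h2_inner B h + (\<Sum>B\<leftarrow>Bs. c B * h2_inner B h)"
    using Cons by (simp add: inner_cmult_left)
  finally show ?case by simp
qed

lemma inner_cnj: "f \<in> H2 \<Longrightarrow> g \<in> H2 \<Longrightarrow> h2_inner g f = cnj (h2_inner f g)"
  unfolding h2_inner_def
  using sums_cnj[THEN iffD2, OF summable_sums[OF summable_inner[of f g]]]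
  by (simp add: sums_iff mult.commute)

lemma inner_add_right: "f \<in> H2 \<Longrightarrow> g \<in> H2 \<Longrightarrow> h \<in> H2 \<Longrightarrow>
   h2_inner h (\<lambda>z. f z + g z) = h2_inner h f + h2_inner h g"
  by (subst (1 2 3) inner_cnj) (auto simp: H2_add inner_add_left)

lemma inner_diff_right: "f \<in> H2 \<Longrightarrow> g \<in> H2 \<Longrightarrow> h \<in> H2 \<Longrightarrow>
   h2_inner h (\<lambda>z. f z - g z) = h2_inner h f - h2_inner h g"
  by (subst (1 2 3) inner_cnj) (auto simp: H2_diff inner_diff_left)

lemma inner_cmult_right: "f \<in> H2 \<Longrightarrow> h \<in> H2 \<Longrightarrow>
   h2_inner h (\<lambda>z. c * f z) = cnj c * h2_inner h f"
  by (subst (1 2) inner_cnj) (auto simp: H2_cmult inner_cmult_left)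

lemma inner_cdiv_right: "f \<in> H2 \<Longrightarrow> h \<in> H2 \<Longrightarrow>
   h2_inner h (\<lambda>z. f z / c) = h2_inner h f / cnj c"
  by (subst (1 2) inner_cnj) (auto simp: H2_cdiv inner_cdiv_left)

lemma inner_sum_list_right: "(\<And>B. B \<in> set Bs \<Longrightarrow> B \<in> H2) \<Longrightarrow> h \<in> H2 \<Longrightarrow>
   h2_inner h (\<lambda>z. \<Sum>B\<leftarrow>Bs. c B * B z) = (\<Sum>B\<leftarrow>Bs. cnj (c B) * h2_inner h B)"
proof -
  assume a: "\<And>B. B \<in> set Bs \<Longrightarrow> B \<in> H2" "h \<in> H2"
  have "h2_inner h (\<lambda>z. \<Sum>B\<leftarrow>Bs. c B * B z) = cnj (h2_inner (\<lambda>z. \<Sum>B\<leftarrow>Bs. c B * B z) h)"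
    using a by (subst inner_cnj) (auto intro!: H2_sum_list)
  also have "\<dots> = cnj (\<Sum>B\<leftarrow>Bs. c B * h2_inner B h)" using a by (simp add: inner_sum_list_left)
  also have "\<dots> = (\<Sum>B\<leftarrow>Bs. cnj (c B) * h2_inner h B)"
    using a(1) by (induction Bs) (auto simp: inner_cnj[OF _ a(2)])
  finally show ?thesis .
qed

definition nsq :: "(complex \<Rightarrow> complex) \<Rightarrow> real" where
  "nsq f = (\<Sum>k. (cmod (taylor_coeff f k))\<^sup>2)"

lemma inner_self: assumes "f \<in> H2" shows "h2_inner f f = of_real (nsq f)"
proof -
  have "(\<lambda>k. taylor_coeff f k * cnj (taylor_coeff f k)) = (\<lambda>k. of_real ((cmod (taylor_coeff f k))\<^sup>2))"
    by (simp only: complex_norm_square)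
  thus ?thesis unfolding h2_inner_def nsq_def by (simp add: suminf_of_real[OF H2_summ[OF assms]])
qed

lemma nsq_nonneg: "f \<in> H2 \<Longrightarrow> 0 \<le> nsq f"
  unfolding nsq_def by (intro suminf_nonneg H2_summ) auto

lemma h2_norm_nsq: "f \<in> H2 \<Longrightarrow> h2_norm f = sqrt (nsq f)"
  by (simp add: h2_norm_def inner_self)

lemma h2_norm_sq: "f \<in> H2 \<Longrightarrow> (h2_norm f)\<^sup>2 = nsq f"
  by (simp add: h2_norm_nsq nsq_nonneg)

lemma h2_norm_nonneg: "f \<in> H2 \<Longrightarrow> 0 \<le> h2_norm f"
  by (simp add: h2_norm_nsq nsq_nonneg)

lemma nsq_zero: "f \<in> H2 \<Longrightarrow> nsq f = 0 \<Longrightarrow> taylor_coeff f k = 0"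
  unfolding nsq_def using suminf_eq_zero_iff[OF H2_summ[of f]] by auto

lemma null_inner_right: "f \<in> H2 \<Longrightarrow> nsq f = 0 \<Longrightarrow> h2_inner g f = 0"
  unfolding h2_inner_def using nsq_zero by simp

lemma null_inner_left: "f \<in> H2 \<Longrightarrow> nsq f = 0 \<Longrightarrow> h2_inner f g = 0"
  unfolding h2_inner_def using nsq_zero by simp

lemma cauchy_schwarz:
  assumes "f \<in> H2" "g \<in> H2"
  shows "cmod (h2_inner f g) \<le> h2_norm f * h2_norm g"
proof -
  let ?a = "\<lambda>k. cmod (taylor_coeff f k)" and ?b = "\<lambda>k. cmod (taylor_coeff g k)"
  have "cmod (h2_inner f g) \<le> (\<Sum>k. cmod (taylor_coeff f k * cnj (taylor_coeff g k)))"
    unfolding h2_inner_def by (rule summable_norm[OF summable_inner_norm[OF assms]])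
  also have "\<dots> \<le> sqrt (nsq f) * sqrt (nsq g)"
  proof (rule suminf_le_const[OF summable_inner_norm[OF assms]])
    fix n
    have "(\<Sum>k<n. cmod (taylor_coeff f k * cnj (taylor_coeff g k))) = (\<Sum>k\<in>{..<n}. \<bar>?a k\<bar> * \<bar>?b k\<bar>)"
      by (simp add: norm_mult)
    also have "\<dots> \<le> L2_set ?a {..<n} * L2_set ?b {..<n}" by (rule L2_set_mult_ineq)
    also have "\<dots> \<le> sqrt (nsq f) * sqrt (nsq g)"
      unfolding L2_set_def nsq_def
      by (intro mult_mono real_sqrt_le_mono sum_le_suminf H2_summ assms real_sqrt_ge_zero suminf_nonneg sum_nonneg) auto
    finally show "(\<Sum>k<n. cmod (taylor_coeff f k * cnj (taylor_coeff g k))) \<le> sqrt (nsq f) * sqrt (nsq g)" .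
  qed
  finally show ?thesis using assms by (simp add: h2_norm_nsq)
qed

fun ON :: "(complex \<Rightarrow> complex) list \<Rightarrow> bool" where
  "ON [] = True"
| "ON (B # Bs) = (ON Bs \<and> B \<in> H2 \<and> (nsq B = 1 \<or> nsq B = 0) \<and> (\<forall>B'\<in>set Bs. h2_inner B B' = 0))"

lemma ON_H2: "ON Bs \<Longrightarrow> B \<in> set Bs \<Longrightarrow> B \<in> H2"
  by (induction Bs) auto

lemma sum_list_zero_cong: "(\<And>x. x \<in> set xs \<Longrightarrow> f x = 0) \<Longrightarrow> (\<Sum>x\<leftarrow>xs. f x) = (0::'a::monoid_add)"
  by (induction xs) auto

lemma Re_sum_list: "Re (\<Sum>x\<leftarrow>xs. f x) = (\<Sum>x\<leftarrow>xs. Re (f x))"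
  by (induction xs) auto

lemma zero_fun_H2: "(\<lambda>z::complex. 0::complex) \<in> H2"
  by (rule holo_big_H2[of 2]) auto

lemma tc_zero_fun: "taylor_coeff (\<lambda>z. 0) k = 0"
  by (simp add: taylor_coeff_def higher_deriv_const)

lemma nsq_zero_fun: "nsq (\<lambda>z. 0) = 0"
  by (simp add: nsq_def tc_zero_fun)

lemma inner_zero_fun_right: "h2_inner h (\<lambda>z. 0) = 0"
  by (simp add: h2_inner_def tc_zero_fun)

lemma proj_H2: "(\<And>B. B \<in> set Bs \<Longrightarrow> B \<in> H2) \<Longrightarrow> g \<in> H2 \<Longrightarrow> proj_perp Bs g \<in> H2"
  unfolding proj_perp_def by (intro H2_diff H2_sum_list) auto

lemma proj_cons: "proj_perp (B # Bs) g = (\<lambda>z. proj_perp Bs g z - h2_inner g B * B z)"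
  unfolding proj_perp_def by (auto simp: algebra_simps)

lemma proj_rev: "proj_perp (rev Bs) g = proj_perp Bs g"
  unfolding proj_perp_def by (simp add: rev_map[symmetric] sum_list_rev)

lemma inner_proj_left:
  assumes "\<And>B. B \<in> set Bs \<Longrightarrow> B \<in> H2" "g \<in> H2" "h \<in> H2"
  shows "h2_inner (proj_perp Bs g) h = h2_inner g h - (\<Sum>B\<leftarrow>Bs. h2_inner g B * h2_inner B h)"
  unfolding proj_perp_def using assms
  by (subst inner_diff_left) (auto intro!: H2_sum_list simp: inner_sum_list_left)

lemma inner_proj_right:
  assumes "\<And>B. B \<in> set Bs \<Longrightarrow> B \<in> H2" "g \<in> H2" "h \<in> H2"
  shows "h2_inner h (proj_perp Bs g) = h2_inner h g - (\<Sum>B\<leftarrow>Bs. cnj (h2_inner g B) * h2_inner h B)"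
  unfolding proj_perp_def using assms
  by (subst inner_diff_right) (auto intro!: H2_sum_list simp: inner_sum_list_right)

lemma proj_orth:
  assumes "ON Bs" "g \<in> H2" "B' \<in> set Bs"
  shows "h2_inner (proj_perp Bs g) B' = 0"
  using assms
proof (induction Bs arbitrary: B')
  case Nil
  then show ?case by simp
next
  case (Cons B Bs)
  have H: "\<And>C. C \<in> set (B#Bs) \<Longrightarrow> C \<in> H2" using ON_H2[OF Cons.prems(1)] by auto
  have Q: "proj_perp Bs g \<in> H2" using H Cons.prems by (intro proj_H2) auto
  have e: "h2_inner (proj_perp (B#Bs) g) B' = h2_inner (proj_perp Bs g) B' - h2_inner g B * h2_inner B B'"
    unfolding proj_cons using H Q Cons.prems
    by (subst inner_diff_left) (auto intro!: H2_cmult simp: inner_cmult_left)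
  show ?case
  proof (cases "B' \<in> set Bs")
    case True
    then show ?thesis using e Cons by auto
  next
    case False
    hence B': "B' = B" using Cons.prems by auto
    have "h2_inner (proj_perp Bs g) B = h2_inner g B - (\<Sum>C\<leftarrow>Bs. h2_inner g C * h2_inner C B)"
      using H Cons.prems by (intro inner_proj_left) auto
    also have "(\<Sum>C\<leftarrow>Bs. h2_inner g C * h2_inner C B) = 0"
    proof (rule sum_list_zero_cong)
      fix C assume "C \<in> set Bs"
      hence "h2_inner B C = 0" using Cons.prems by auto
      hence "h2_inner C B = 0" using H \<open>C \<in> set Bs\<close> by (subst inner_cnj) auto
      thus "h2_inner g C * h2_inner C B = 0" by simp
    qed
    finally have 1: "h2_inner (proj_perp Bs g) B = h2_inner g B" by simp
    have "nsq B = 1 \<or> nsq B = 0" using Cons.prems by auto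
    then show ?thesis
    proof
      assume "nsq B = 1"
      hence "h2_inner B B = 1" using H by (simp add: inner_self)
      thus ?thesis using e 1 B' by simp
    next
      assume "nsq B = 0"
      thus ?thesis using e 1 B' null_inner_right[of B] H by simp
    qed
  qed
qed

lemma proj_selfadj:
  assumes "\<And>B. B \<in> set Bs \<Longrightarrow> B \<in> H2" "g \<in> H2" "h \<in> H2"
  shows "h2_inner (proj_perp Bs g) h = h2_inner g (proj_perp Bs h)"
proof -
  have "(\<Sum>B\<leftarrow>Bs. h2_inner g B * h2_inner B h) = (\<Sum>B\<leftarrow>Bs. cnj (h2_inner h B) * h2_inner g B)"
    using assms(1)
  proof (induction Bs)
    case (Cons B Bs)
    have "h2_inner B h = cnj (h2_inner h B)" using Cons.prems assms by (subst inner_cnj) auto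
    then show ?case using Cons by auto
  qed simp
  thus ?thesis using assms by (simp add: inner_proj_left inner_proj_right)
qed

lemma orth_inner:
  assumes "\<And>B. B \<in> set Bs \<Longrightarrow> B \<in> H2" "x \<in> H2" "h \<in> H2" "\<And>B. B \<in> set Bs \<Longrightarrow> h2_inner x B = 0"
  shows "h2_inner (proj_perp Bs h) x = h2_inner h x" "h2_inner x (proj_perp Bs h) = h2_inner x h"
proof -
  have "(\<Sum>B\<leftarrow>Bs. h2_inner h B * h2_inner B x) = 0"
  proof (rule sum_list_zero_cong)
    fix B assume B: "B \<in> set Bs"
    have "h2_inner B x = cnj (h2_inner x B)" using assms B by (subst inner_cnj) auto
    thus "h2_inner h B * h2_inner B x = 0" using assms B by simp
  qed
  thus "h2_inner (proj_perp Bs h) x = h2_inner h x" using assms by (simp add: inner_proj_left)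
  have "(\<Sum>B\<leftarrow>Bs. cnj (h2_inner h B) * h2_inner x B) = 0"
    by (rule sum_list_zero_cong) (use assms in auto)
  thus "h2_inner x (proj_perp Bs h) = h2_inner x h" using assms by (simp add: inner_proj_right)
qed

lemma proj_proj:
  assumes "ON Bs" "g \<in> H2" "h \<in> H2"
  shows "h2_inner (proj_perp Bs g) (proj_perp Bs h) = h2_inner (proj_perp Bs g) h"
  using orth_inner(2)[of Bs "proj_perp Bs g" h] assms ON_H2 proj_H2 proj_orth by blast

lemma nsq_proj:
  assumes "ON Bs" "g \<in> H2"
  shows "nsq (proj_perp Bs g) = nsq g - (\<Sum>B\<leftarrow>Bs. (cmod (h2_inner g B))\<^sup>2)"
proof -
  have H: "\<And>B. B \<in> set Bs \<Longrightarrow> B \<in> H2" using ON_H2 assms by auto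
  have QH: "proj_perp Bs g \<in> H2" using H assms by (intro proj_H2)
  have "of_real (nsq (proj_perp Bs g)) = h2_inner (proj_perp Bs g) (proj_perp Bs g)"
    using QH by (simp add: inner_self)
  also have "\<dots> = h2_inner (proj_perp Bs g) g" using proj_proj assms by blast
  also have "\<dots> = h2_inner g g - (\<Sum>B\<leftarrow>Bs. h2_inner g B * h2_inner B g)"
    using H assms by (intro inner_proj_left) auto
  also have "(\<Sum>B\<leftarrow>Bs. h2_inner g B * h2_inner B g) = (\<Sum>B\<leftarrow>Bs. of_real ((cmod (h2_inner g B))\<^sup>2))"
    using H
  proof (induction Bs)
    case (Cons B Bs)
    have "h2_inner B g = cnj (h2_inner g B)" using Cons.prems assms by (subst inner_cnj) auto
    then show ?case using Cons by (simp add: complex_norm_square[symmetric] del: of_real_power)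
  qed simp
  finally have "of_real (nsq (proj_perp Bs g)) = of_real (nsq g) - (\<Sum>B\<leftarrow>Bs. complex_of_real ((cmod (h2_inner g B))\<^sup>2))"
    using assms by (simp add: inner_self)
  hence "Re (of_real (nsq (proj_perp Bs g))) = Re (of_real (nsq g) - (\<Sum>B\<leftarrow>Bs. complex_of_real ((cmod (h2_inner g B))\<^sup>2)))"
    by simp
  thus ?thesis by (simp add: Re_sum_list)
qed

lemma kern_holo: "cmod a < 1 \<Longrightarrow> \<exists>R>1. kern n a holomorphic_on ball 0 R"
proof -
  assume a: "cmod a < 1"
  define R where "R = (if a = 0 then 2 else 1 / cmod a)"
  have R: "R > 1" using a by (auto simp: R_def field_simps)
  have "\<And>z. z \<in> ball 0 R \<Longrightarrow> 1 - cnj a * z \<noteq> 0"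
  proof
    fix z assume z: "z \<in> ball 0 R" and e: "1 - cnj a * z = 0"
    hence "cmod (cnj a * z) = 1" by (metis eq_iff_diff_eq_0 norm_one)
    moreover have "cmod (cnj a * z) < 1"
    proof (cases "a = 0")
      case False
      have "cmod z < 1 / cmod a" using z False by (simp add: R_def)
      hence "cmod a * cmod z < 1" using False by (simp add: field_simps)
      thus ?thesis by (simp add: norm_mult)
    qed simp
    ultimately show False by simp
  qed
  hence "kern n a holomorphic_on ball 0 R"
    unfolding kern_def by (intro holomorphic_intros) auto
  thus ?thesis using R by blast
qed

lemma kern_H2: "cmod a < 1 \<Longrightarrow> kern n a \<in> H2"
  using kern_holo holo_big_H2 by blast

lemma ekern_H2: "cmod a < 1 \<Longrightarrow> ekern n a \<in> H2"
  unfolding ekern_def by (intro H2_cdiv kern_H2)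

lemma normalize_H2: "v \<in> H2 \<Longrightarrow> h2_normalize v \<in> H2"
  unfolding h2_normalize_def by (rule H2_cdiv)

lemma normalize_zero: "h2_norm v = 0 \<Longrightarrow> h2_normalize v = (\<lambda>z. 0)"
  unfolding h2_normalize_def by simp

lemma norm_zero_iff: "v \<in> H2 \<Longrightarrow> h2_norm v = 0 \<longleftrightarrow> nsq v = 0"
  using nsq_nonneg by (simp add: h2_norm_nsq)

lemma normalize_nsq:
  assumes "v \<in> H2" "nsq v \<noteq> 0"
  shows "nsq (h2_normalize v) = 1"
proof -
  let ?c = "h2_norm v"
  have c: "?c \<noteq> 0" "?c\<^sup>2 = nsq v" using assms norm_zero_iff h2_norm_sq by auto
  have "of_real (nsq (h2_normalize v)) = h2_inner (h2_normalize v) (h2_normalize v)"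
    using assms normalize_H2 by (simp add: inner_self)
  also have "\<dots> = h2_inner v v / (of_real ?c * of_real ?c)"
    unfolding h2_normalize_def using assms
    by (simp add: inner_cdiv_left inner_cdiv_right H2_cdiv)
  also have "\<dots> = 1" using c(1) assms by (simp add: inner_self c(2)[symmetric] power2_eq_square[symmetric])
  finally show ?thesis by simp
qed

lemma gs_prop:
  "(\<forall>p\<in>set L. cmod (snd p) < 1) \<Longrightarrow>
     ON (gs_rev L) \<and> (\<forall>p\<in>set L. nsq (proj_perp (gs_rev L) (ekern (fst p) (snd p))) = 0)"
proof (induction L)
  case Nil
  then show ?case by simp
next
  case (Cons p L)
  define Bs where "Bs = gs_rev L"
  have IH: "ON Bs" "\<And>q. q \<in> set L \<Longrightarrow> nsq (proj_perp Bs (ekern (fst q) (snd q))) = 0"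
    using Cons by (auto simp: Bs_def)
  have H: "\<And>B. B \<in> set Bs \<Longrightarrow> B \<in> H2" using ON_H2 IH by auto
  have EH: "\<And>q. q \<in> set (p#L) \<Longrightarrow> ekern (fst q) (snd q) \<in> H2" using Cons.prems ekern_H2 by auto
  define e where "e = ekern (fst p) (snd p)"
  define v where "v = proj_perp Bs e"
  define B where "B = h2_normalize v"
  have eH: "e \<in> H2" using EH e_def by auto
  have vH: "v \<in> H2" unfolding v_def using H eH by (rule proj_H2)
  have BH: "B \<in> H2" unfolding B_def using vH by (rule normalize_H2)
  have gs: "gs_rev (p#L) = B # Bs" by (simp add: Bs_def B_def v_def e_def Let_def)
  have Borth: "\<forall>B'\<in>set Bs. h2_inner B B' = 0"
  proof
    fix B' assume "B' \<in> set Bs"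
    hence "h2_inner v B' = 0" unfolding v_def using proj_orth IH eH by blast
    thus "h2_inner B B' = 0" unfolding B_def h2_normalize_def using vH H \<open>B' \<in> set Bs\<close>
      by (simp add: inner_cdiv_left)
  qed
  have Bn: "nsq B = 1 \<or> nsq B = 0"
  proof (cases "nsq v = 0")
    case True
    hence "B = (\<lambda>z. 0)" unfolding B_def using vH norm_zero_iff normalize_zero by blast
    thus ?thesis by (simp add: nsq_zero_fun)
  qed (use normalize_nsq vH B_def in auto)
  have ON': "ON (B # Bs)" using IH BH Bn Borth by simp
  have c1: "nsq (proj_perp (B#Bs) e) = 0"
  proof (cases "nsq v = 0")
    case True
    hence "B = (\<lambda>z. 0)" unfolding B_def using vH norm_zero_iff normalize_zero by blast
    hence "proj_perp (B#Bs) e = v" unfolding proj_cons v_def by (simp add: inner_zero_fun_right)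
    thus ?thesis using True by simp
  next
    case False
    let ?c = "h2_norm v"
    have c: "?c \<noteq> 0" "?c\<^sup>2 = nsq v" using False vH norm_zero_iff h2_norm_sq by auto
    have "h2_inner e v = h2_inner v v"
      unfolding v_def using proj_selfadj[OF H eH eH] proj_proj[OF IH(1) eH eH] by simp
    hence "h2_inner e B = h2_inner v v / of_real ?c"
      unfolding B_def h2_normalize_def using vH eH by (simp add: inner_cdiv_right)
    also have "\<dots> = of_real ?c" using c(1) vH by (simp add: inner_self c(2)[symmetric] power2_eq_square[symmetric] field_simps)
    finally have eB: "h2_inner e B = of_real ?c" .
    have "proj_perp (B#Bs) e = (\<lambda>z. 0)"
      unfolding proj_cons eB using c by (auto simp: B_def h2_normalize_def v_def)
    thus ?thesis by (simp add: nsq_zero_fun)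
  qed
  have c2: "nsq (proj_perp (B#Bs) (ekern (fst q) (snd q))) = 0" if q: "q \<in> set L" for q
  proof -
    define w where "w = ekern (fst q) (snd q)"
    have wH: "w \<in> H2" using EH q w_def by auto
    have w0: "nsq (proj_perp Bs w) = 0" using IH(2)[OF q] w_def by simp
    have "h2_inner w v = h2_inner (proj_perp Bs w) e"
      unfolding v_def using proj_selfadj[OF H wH eH] by simp
    also have "\<dots> = 0" using null_inner_left[OF proj_H2[OF H wH] w0] .
    finally have "h2_inner w B = 0"
      unfolding B_def h2_normalize_def using vH wH by (simp add: inner_cdiv_right)
    hence "proj_perp (B#Bs) w = proj_perp Bs w" unfolding proj_cons by simp
    thus ?thesis using w0 w_def by simp
  qed
  show ?case unfolding gs using ON' c1 c2 e_def by auto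
qed

lemma deriv_inv_pow:
  assumes "w \<noteq> 1"
  shows "((\<lambda>w::complex. P / (1-w)^q) has_field_derivative P * of_nat q / (1-w)^(Suc q)) (at w)"
proof -
  have nz: "1 - w \<noteq> 0" using assms by auto
  have d0: "((\<lambda>w. (1-w)^q) has_field_derivative of_nat q * ((0 - 1) * (1-w)^(q - Suc 0))) (at w)"
    by (intro DERIV_power DERIV_diff DERIV_const DERIV_ident)
  have d1: "((\<lambda>w. (1-w)^q) has_field_derivative of_nat q * (1-w)^(q-1) * (-1)) (at w)"
    using d0 by (simp add: algebra_simps)
  have d: "((\<lambda>w::complex. P / (1-w)^q) has_field_derivative
      (0 * (1-w)^q - P * (of_nat q * (1-w)^(q-1) * (-1))) / ((1-w)^q * (1-w)^q)) (at w)"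
    by (rule DERIV_divide[OF DERIV_const d1]) (use nz in simp)
  have e0: "(0 * u^q - P * (of_nat q * u^(q-1) * (-1))) / (u^q * u^q) = P * of_nat q / u^(Suc q)"
    if u: "u \<noteq> 0" for u :: complex
  proof (cases q)
    case 0 then show ?thesis by simp
  next
    case (Suc r)
    have "u^q * u^q = u^r * u^(Suc q)" using Suc by (simp add: power_Suc)
    then show ?thesis using u Suc by (simp add: field_simps)
  qed
  have e: "(0 * (1-w)^q - P * (of_nat q * (1-w)^(q-1) * (-1))) / ((1-w)^q * (1-w)^q)
        = P * of_nat q / (1-w)^(Suc q)" using e0[OF nz] .
  show ?thesis using d unfolding e .
qed

lemma hd_inv_pow:
  "w \<in> ball 0 1 \<Longrightarrow> (deriv ^^ j) (\<lambda>w::complex. 1 / (1-w)^m) w = pochhammer (of_nat m) j / (1-w)^(m+j)"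
proof (induction j arbitrary: w)
  case 0
  then show ?case by simp
next
  case (Suc j)
  have ev: "eventually (\<lambda>x. x \<in> ball 0 1) (nhds w)"
    using Suc.prems by (intro eventually_nhds_in_open) auto
  have "(deriv ^^ Suc j) (\<lambda>w::complex. 1 / (1-w)^m) w = deriv ((deriv ^^ j) (\<lambda>w::complex. 1 / (1-w)^m)) w"
    by simp
  also have "\<dots> = deriv (\<lambda>x. pochhammer (of_nat m) j / (1-x)^(m+j)) w"
    by (rule deriv_cong_ev[OF eventually_mono[OF ev]]) (auto simp: Suc.IH)
  also have "\<dots> = pochhammer (of_nat m) j * of_nat (m+j) / (1-w)^(Suc (m+j))"
    by (rule DERIV_imp_deriv[OF deriv_inv_pow]) (use Suc.prems in auto)
  also have "\<dots> = pochhammer (of_nat m) (Suc j) / (1-w)^(m + Suc j)"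
    by (simp add: pochhammer_Suc)
  finally show ?case .
qed

lemma negbin_sums:
  assumes "cmod w < 1"
  shows "(\<lambda>j. pochhammer (of_nat m) j / fact j * w^j) sums (1 / (1-w)^m)"
proof -
  have nz: "\<And>x::complex. x \<in> ball 0 1 \<Longrightarrow> (1-x)^m \<noteq> 0"
    by auto
  have "(\<lambda>w::complex. 1 / (1-w)^m) holomorphic_on ball 0 1"
    using nz by (intro holomorphic_intros) auto
  from holomorphic_power_series[OF this, of w] assms
  show ?thesis by (simp add: hd_inv_pow)
qed

definition kc :: "nat \<Rightarrow> complex \<Rightarrow> nat \<Rightarrow> complex" where
  "kc n a k = (if n \<le> k then of_nat (fact k) / of_nat (fact (k-n)) * cnj a^(k-n) else 0)"

lemma fact_poch: "(of_nat (fact (j+n)) :: complex) = of_nat (fact n) * pochhammer (of_nat (Suc n)) j"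
proof -
  have "(fact (n + j) :: complex) = pochhammer 1 (n+j)" by (rule pochhammer_fact)
  also have "\<dots> = pochhammer 1 n * pochhammer (1 + of_nat n) j" by (rule pochhammer_product')
  also have "\<dots> = fact n * pochhammer (of_nat (Suc n)) j" by (simp add: pochhammer_fact add.commute)
  finally show ?thesis by (simp add: add.commute)
qed

lemma kern_sums:
  assumes a: "cmod a < 1" and z: "z \<in> ball 0 1"
  shows "(\<lambda>k. kc n a k * z^k) sums kern n a z"
proof -
  define w where "w = cnj a * z"
  have w: "cmod w < 1"
  proof -
    have "cmod w = cmod a * cmod z" by (simp add: w_def norm_mult)
    also have "\<dots> < 1 * 1" using a z by (intro mult_strict_mono') auto
    finally show ?thesis by simp
  qed
  have "(\<lambda>j. (of_nat (fact n) * z^n) * (pochhammer (of_nat (Suc n)) j / fact j * w^j)) sums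
          ((of_nat (fact n) * z^n) * (1 / (1-w)^(Suc n)))"
    by (rule sums_mult[OF negbin_sums[OF w]])
  moreover have "(\<lambda>j. (of_nat (fact n) * z^n) * (pochhammer (of_nat (Suc n)) j / fact j * w^j))
      = (\<lambda>j. kc n a (j+n) * z^(j+n))"
  proof
    fix j
    have "kc n a (j+n) * z^(j+n) = of_nat (fact (j+n)) / of_nat (fact j) * cnj a ^ j * z^(j+n)"
      by (simp add: kc_def)
    also have "\<dots> = (of_nat (fact n) * z^n) * (pochhammer (of_nat (Suc n)) j / fact j * w^j)"
      unfolding fact_poch w_def by (simp add: power_add power_mult_distrib field_simps)
    finally show "(of_nat (fact n) * z^n) * (pochhammer (of_nat (Suc n)) j / fact j * w^j) = kc n a (j+n) * z^(j+n)" ..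
  qed
  moreover have "(of_nat (fact n) * z^n) * (1 / (1-w)^(Suc n)) = kern n a z"
    by (simp add: kern_def w_def)
  ultimately have "(\<lambda>j. kc n a (j+n) * z^(j+n)) sums kern n a z" by simp
  thus ?thesis by (subst (asm) sums_zero_iff_shift[of n "\<lambda>k. kc n a k * z^k"]) (auto simp: kc_def)
qed

lemma tc_kern: "cmod a < 1 \<Longrightarrow> taylor_coeff (kern n a) k = kc n a k"
  by (rule tc_unique[of 1]) (auto intro: kern_sums)

lemma repro:
  assumes h: "h \<in> H2" and a: "cmod a < 1"
  shows "h2_inner h (kern n a) = (deriv ^^ n) h a"
proof -
  have hol: "(deriv ^^ n) h holomorphic_on ball 0 1"
    using H2_hol[OF h] by (intro holomorphic_higher_deriv) auto
  have "(\<lambda>i. (deriv ^^ i) ((deriv ^^ n) h) 0 / fact i * (a - 0)^i) sums (deriv ^^ n) h a"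
    by (rule holomorphic_power_series[OF hol]) (use a in auto)
  moreover have "(\<lambda>i. (deriv ^^ i) ((deriv ^^ n) h) 0 / fact i * (a - 0)^i) =
      (\<lambda>i. taylor_coeff h (i+n) * cnj (kc n a (i+n)))"
  proof
    fix i
    have "(deriv ^^ i) ((deriv ^^ n) h) = (deriv ^^ (i+n)) h" by (simp add: funpow_add)
    moreover have "(deriv ^^ (i+n)) h 0 = taylor_coeff h (i+n) * fact (i+n)"
      by (simp add: taylor_coeff_def)
    ultimately show "(deriv ^^ i) ((deriv ^^ n) h) 0 / fact i * (a - 0)^i = taylor_coeff h (i+n) * cnj (kc n a (i+n))"
      by (simp add: kc_def)
  qed
  ultimately have "(\<lambda>i. taylor_coeff h (i+n) * cnj (kc n a (i+n))) sums (deriv ^^ n) h a" by simp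
  hence "(\<lambda>k. taylor_coeff h k * cnj (kc n a k)) sums (deriv ^^ n) h a"
    by (subst (asm) sums_zero_iff_shift) (auto simp: kc_def)
  thus ?thesis unfolding h2_inner_def using tc_kern[OF a] by (simp add: sums_iff)
qed

lemma nsq_kern: "cmod a < 1 \<Longrightarrow> nsq (kern n a) = (\<Sum>k. (cmod (kc n a k))\<^sup>2)"
  by (simp add: nsq_def tc_kern)

lemma kern_lower:
  assumes a: "cmod a < 1"
  shows "(\<Sum>i<M. (cmod a)^(2*i)) \<le> nsq (kern n a)"
proof -
  let ?g = "\<lambda>k. (cmod (kc n a k))\<^sup>2"
  have sg: "summable ?g" using H2_summ[OF kern_H2[OF a]] tc_kern[OF a] by simp
  have "?g sums nsq (kern n a)" using sg nsq_kern[OF a] by (simp add: sums_iff)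
  hence "(\<lambda>i. ?g (i+n)) sums nsq (kern n a)"
    by (subst sums_zero_iff_shift) (auto simp: kc_def)
  hence s2: "summable (\<lambda>i. ?g (i+n))" "nsq (kern n a) = (\<Sum>i. ?g (i+n))" by (auto simp: sums_iff)
  have "(\<Sum>i<M. (cmod a)^(2*i)) \<le> (\<Sum>i<M. ?g (i+n))"
  proof (rule sum_mono)
    fix i
    have f: "1 \<le> real (fact (i+n)) / real (fact i)"
      using fact_mono[of i "i+n"] by (simp add: field_simps)
    have "cmod (kc n a (i+n)) = real (fact (i+n)) / real (fact i) * cmod a ^ i"
      by (simp add: kc_def norm_mult norm_divide norm_power)
    also have "\<dots> \<ge> 1 * cmod a ^ i" by (intro mult_right_mono f) auto
    finally have "cmod a ^ i \<le> cmod (kc n a (i+n))" by simp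
    hence "(cmod a ^ i)\<^sup>2 \<le> ?g (i+n)" by (intro power_mono) auto
    thus "(cmod a)^(2*i) \<le> ?g (i+n)" by (simp add: power_mult[symmetric] mult.commute)
  qed
  also have "\<dots> \<le> (\<Sum>i. ?g (i+n))" by (intro sum_le_suminf s2) auto
  finally show ?thesis using s2 by simp
qed

lemma kern_nsq_ge1: "cmod a < 1 \<Longrightarrow> 1 \<le> nsq (kern n a)"
  using kern_lower[of a 1 n] by simp

lemma kc_bound: "cmod a < 1 \<Longrightarrow> cmod (kc n a k) \<le> fact k"
proof -
  assume a: "cmod a < 1"
  show ?thesis
  proof (cases "n \<le> k")
    case True
    have "cmod (kc n a k) = real (fact k) / real (fact (k-n)) * cmod a ^ (k-n)"
      using True by (simp add: kc_def norm_mult norm_divide norm_power)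
    also have "\<dots> \<le> real (fact k) / 1 * 1"
      using a by (intro mult_mono divide_left_mono power_le_one) (auto simp: fact_ge_1)
    finally show ?thesis by simp
  qed (simp add: kc_def)
qed

lemma ekern_normalize: "ekern n a = h2_normalize (kern n a)"
  by (simp add: ekern_def h2_normalize_def)

lemma kern_norm_pos: "cmod a < 1 \<Longrightarrow> 0 < h2_norm (kern n a)"
proof -
  assume a: "cmod a < 1"
  have "1 \<le> nsq (kern n a)" using kern_nsq_ge1[OF a] .
  thus ?thesis using kern_H2[OF a] by (simp add: h2_norm_nsq)
qed

lemma nsq_ekern: "cmod a < 1 \<Longrightarrow> nsq (ekern n a) = 1"
proof -
  assume a: "cmod a < 1"
  have "1 \<le> nsq (kern n a)" using kern_nsq_ge1[OF a] .
  thus ?thesis unfolding ekern_normalize using kern_H2[OF a] by (intro normalize_nsq) auto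
qed

lemma norm_ekern: "cmod a < 1 \<Longrightarrow> h2_norm (ekern n a) = 1"
  using nsq_ekern ekern_H2 by (simp add: h2_norm_nsq)

lemma ekern_inner: "h \<in> H2 \<Longrightarrow> cmod a < 1 \<Longrightarrow>
    h2_inner h (ekern n a) = h2_inner h (kern n a) / of_real (h2_norm (kern n a))"
  unfolding ekern_def by (simp add: inner_cdiv_right kern_H2)

lemma tail_small:
  assumes h: "h \<in> H2" and d: "\<delta> > 0"
  shows "\<exists>K. (\<Sum>k. if k < K then 0 else (cmod (taylor_coeff h k))\<^sup>2) < \<delta>"
proof -
  let ?f = "\<lambda>k. (cmod (taylor_coeff h k))\<^sup>2"
  have sf: "summable ?f" using H2_summ[OF h] .
  have "(\<lambda>K. \<Sum>k<K. ?f k) \<longlonglongrightarrow> suminf ?f" using summable_LIMSEQ[OF sf] .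
  hence "eventually (\<lambda>K. dist (\<Sum>k<K. ?f k) (suminf ?f) < \<delta>) sequentially"
    using d by (rule tendstoD)
  then obtain K where K: "dist (\<Sum>k<K. ?f k) (suminf ?f) < \<delta>"
    by (auto simp: eventually_sequentially)
  have "(\<lambda>k. if k < K then 0 else ?f k) = (\<lambda>k. ?f k - (if k < K then ?f k else 0))" by auto
  hence "(\<Sum>k. if k < K then 0 else ?f k) = suminf ?f - (\<Sum>k. if k < K then ?f k else 0)"
    using sf by (simp add: suminf_diff summable_finite[of "{..<K}"])
  also have "(\<Sum>k. if k < K then ?f k else 0) = (\<Sum>k<K. ?f k)"
    by (subst suminf_finite[of "{..<K}"]) auto
  finally have "(\<Sum>k. if k < K then 0 else ?f k) = suminf ?f - (\<Sum>k<K. ?f k)" .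
  with K have "(\<Sum>k. if k < K then 0 else ?f k) < \<delta>" by (simp add: dist_real_def)
  thus ?thesis by blast
qed

lemma UE:
  assumes h: "h \<in> H2" and e: "\<epsilon> > 0"
  shows "\<exists>N r. r < 1 \<and> (\<forall>n a. cmod a < 1 \<and> (N \<le> n \<or> r < cmod a) \<longrightarrow> cmod (h2_inner h (ekern n a)) < \<epsilon>)"
proof -
  obtain K where K: "(\<Sum>k. if k < K then 0 else (cmod (taylor_coeff h k))\<^sup>2) < (\<epsilon>/2)\<^sup>2"
    using tail_small[OF h, of "(\<epsilon>/2)\<^sup>2"] e by auto
  define p where "p = (\<lambda>z. \<Sum>k<K. taylor_coeff h k * z^k)"
  have pholo: "p holomorphic_on ball 0 2" unfolding p_def by (intro holomorphic_intros)
  have pH: "p \<in> H2" by (rule holo_big_H2[OF _ pholo]) simp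
  have tcp: "taylor_coeff p k = (if k < K then taylor_coeff h k else 0)" for k
  proof (rule tc_unique[of 1])
    fix z :: complex
    have "(\<lambda>k. (if k < K then taylor_coeff h k else 0) * z^k) sums
            (\<Sum>k\<in>{..<K}. (if k < K then taylor_coeff h k else 0) * z^k)"
      by (rule sums_finite) auto
    thus "(\<lambda>k. (if k < K then taylor_coeff h k else 0) * z^k) sums p z"
      by (simp add: p_def)
  qed simp
  define d where "d = (\<lambda>z. h z - p z)"
  have dH: "d \<in> H2" unfolding d_def by (intro H2_diff h pH)
  have tcd: "taylor_coeff d k = (if k < K then 0 else taylor_coeff h k)" for k
    unfolding d_def using tc_diff[OF H2_hol[OF h] H2_hol[OF pH]] tcp by simp
  have "(\<lambda>k. (cmod (taylor_coeff d k))\<^sup>2) = (\<lambda>k. if k < K then 0 else (cmod (taylor_coeff h k))\<^sup>2)"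
    by (auto simp: tcd)
  hence "nsq d < (\<epsilon>/2)\<^sup>2" using K by (simp add: nsq_def)
  hence "sqrt (nsq d) < sqrt ((\<epsilon>/2)\<^sup>2)" by (rule real_sqrt_less_mono)
  hence nd: "h2_norm d < \<epsilon>/2" using dH e by (simp add: h2_norm_nsq)
  have hpd: "h = (\<lambda>z. p z + d z)" by (simp add: d_def)
  define C where "C = (\<Sum>k<K. cmod (taylor_coeff h k) * fact k)"
  have C0: "0 \<le> C" unfolding C_def by (intro sum_nonneg) auto
  have ipk: "h2_inner p (kern n a) = (\<Sum>k<K. taylor_coeff h k * cnj (kc n a k))" if a: "cmod a < 1" for n a
    unfolding h2_inner_def tc_kern[OF a] tcp
    by (subst suminf_finite[of "{..<K}"]) auto
  have ipk0: "h2_inner p (kern n a) = 0" if a: "cmod a < 1" and n: "K \<le> n" for n a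
    unfolding ipk[OF a] using n by (intro sum.neutral) (auto simp: kc_def)
  have ipkC: "cmod (h2_inner p (kern n a)) \<le> C" if a: "cmod a < 1" for n a
  proof -
    have "cmod (h2_inner p (kern n a)) \<le> (\<Sum>k<K. cmod (taylor_coeff h k * cnj (kc n a k)))"
      unfolding ipk[OF a] by (rule norm_sum)
    also have "\<dots> \<le> C" unfolding C_def
      by (intro sum_mono) (auto simp: norm_mult intro!: mult_left_mono kc_bound a)
    finally show ?thesis .
  qed
  define M :: nat where "M = nat \<lceil>2 * (2 * C / \<epsilon>)\<^sup>2\<rceil> + 1"
  have M1: "1 \<le> M" by (simp add: M_def)
  have M2: "real M > 2 * (2 * C / \<epsilon>)\<^sup>2" unfolding M_def by linarith
  define r where "r = 1 - 1 / (4 * real M)"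
  have r1: "r < 1" using M1 by (simp add: r_def)
  have r0: "0 \<le> r" using M1 by (simp add: r_def field_simps)
  have rM: "1/2 \<le> r^(2*M)"
  proof -
    have "1 + real (2*M) * (- 1 / (4 * real M)) \<le> (1 + (- 1 / (4 * real M)))^(2*M)"
      by (rule Bernoulli_inequality) (use M1 in \<open>simp add: field_simps\<close>)
    moreover have "1 + real (2*M) * (- 1 / (4 * real M)) = 1/2" using M1 by (simp add: field_simps)
    ultimately show ?thesis by (simp add: r_def)
  qed
  have big: "h2_norm (kern n a) > 2 * C / \<epsilon>" if a: "cmod a < 1" "r < cmod a" for n a
  proof -
    have "real M * (1/2) \<le> (\<Sum>i<M. (cmod a)^(2*i))"
    proof -
      have "\<And>i. i \<in> {..<M} \<Longrightarrow> 1/2 \<le> (cmod a)^(2*i)"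
      proof -
        fix i assume "i \<in> {..<M}"
        hence "(cmod a)^(2*M) \<le> (cmod a)^(2*i)" using a by (intro power_decreasing) auto
        moreover have "r^(2*M) \<le> (cmod a)^(2*M)" using a r0 by (intro power_mono) auto
        ultimately show "1/2 \<le> (cmod a)^(2*i)" using rM by linarith
      qed
      from sum_bounded_below[of "{..<M}" "1/2", OF this] show ?thesis by simp
    qed
    also have "\<dots> \<le> nsq (kern n a)" by (rule kern_lower[OF a(1)])
    finally have "(2 * C / \<epsilon>)\<^sup>2 < nsq (kern n a)" using M2 by linarith
    hence "sqrt ((2 * C / \<epsilon>)\<^sup>2) < sqrt (nsq (kern n a))" by (rule real_sqrt_less_mono)
    thus ?thesis using C0 e kern_H2[OF a(1)] by (simp add: h2_norm_nsq)
  qed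
  show ?thesis
  proof (intro exI conjI allI impI)
    show "r < 1" by (rule r1)
    fix n a assume na: "cmod a < 1 \<and> (K \<le> n \<or> r < cmod a)"
    hence a: "cmod a < 1" by simp
    have kp: "0 < h2_norm (kern n a)" by (rule kern_norm_pos[OF a])
    have ipe: "h2_inner p (ekern n a) = h2_inner p (kern n a) / of_real (h2_norm (kern n a))"
      by (rule ekern_inner[OF pH a])
    have pe: "cmod (h2_inner p (ekern n a)) < \<epsilon>/2"
    proof (cases "K \<le> n")
      case True
      then show ?thesis using ipe ipk0[OF a True] e by simp
    next
      case False
      hence ra: "r < cmod a" using na by simp
      have "cmod (h2_inner p (ekern n a)) = cmod (h2_inner p (kern n a)) / h2_norm (kern n a)"
        using ipe kp by (simp add: norm_divide)
      also have "\<dots> \<le> C / h2_norm (kern n a)" using ipkC[OF a] kp by (intro divide_right_mono) auto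
      also have "\<dots> < \<epsilon>/2"
      proof -
        have "2 * C / \<epsilon> < h2_norm (kern n a)" by (rule big[OF a ra])
        hence "2 * C < \<epsilon> * h2_norm (kern n a)" using e by (simp add: field_simps)
        thus ?thesis using kp by (simp add: field_simps)
      qed
      finally show ?thesis .
    qed
    have de: "cmod (h2_inner d (ekern n a)) < \<epsilon>/2"
    proof -
      have "cmod (h2_inner d (ekern n a)) \<le> h2_norm d * h2_norm (ekern n a)"
        by (rule cauchy_schwarz[OF dH ekern_H2[OF a]])
      also have "\<dots> = h2_norm d" using norm_ekern[OF a] by simp
      finally show ?thesis using nd by simp
    qed
    have "h2_inner h (ekern n a) = h2_inner p (ekern n a) + h2_inner d (ekern n a)"
      by (subst hpd, rule inner_add_left[OF pH dH ekern_H2[OF a]])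
    hence "cmod (h2_inner h (ekern n a)) \<le> cmod (h2_inner p (ekern n a)) + cmod (h2_inner d (ekern n a))"
      by (simp add: norm_triangle_ineq)
    thus "cmod (h2_inner h (ekern n a)) < \<epsilon>" using pe de by simp
  qed
qed

lemma UE_list:
  assumes "\<And>h. h \<in> set hs \<Longrightarrow> h \<in> H2" "\<epsilon> > 0"
  shows "\<exists>N r. r < 1 \<and> (\<forall>n a. cmod a < 1 \<and> (N \<le> n \<or> r < cmod a) \<longrightarrow>
           (\<forall>h\<in>set hs. cmod (h2_inner h (ekern n a)) < \<epsilon>))"
  using assms(1)
proof (induction hs)
  case Nil
  then show ?case by (intro exI[of _ 0] exI[of _ 0]) simp
next
  case (Cons h hs)
  obtain N1 r1 where 1: "r1 < 1" "\<forall>n a. cmod a < 1 \<and> (N1 \<le> n \<or> r1 < cmod a) \<longrightarrow> cmod (h2_inner h (ekern n a)) < \<epsilon>"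
    using UE[of h \<epsilon>] Cons.prems assms(2) by auto
  obtain N2 r2 where 2: "r2 < 1" "\<forall>n a. cmod a < 1 \<and> (N2 \<le> n \<or> r2 < cmod a) \<longrightarrow>
           (\<forall>h\<in>set hs. cmod (h2_inner h (ekern n a)) < \<epsilon>)"
    using Cons by auto
  show ?case
    by (rule exI[of _ "max N1 N2"], rule exI[of _ "max r1 r2"]) (use 1 2 in auto)
qed

lemma sum_list_cdiv: "(\<Sum>x\<leftarrow>xs. f x / (c::complex)) = (\<Sum>x\<leftarrow>xs. f x) / c"
  by (induction xs) (auto simp: add_divide_distrib)

lemma proj_cdiv:
  assumes "\<And>B. B \<in> set Bs \<Longrightarrow> B \<in> H2" "v \<in> H2"
  shows "proj_perp Bs (\<lambda>z. v z / c) = (\<lambda>z. proj_perp Bs v z / c)"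
proof
  fix z
  have "(\<Sum>B\<leftarrow>Bs. h2_inner (\<lambda>z. v z / c) B * B z) = (\<Sum>B\<leftarrow>Bs. h2_inner v B * B z / c)"
    using assms by (intro arg_cong[of _ _ sum_list] map_cong) (auto simp: inner_cdiv_left)
  also have "\<dots> = (\<Sum>B\<leftarrow>Bs. h2_inner v B * B z) / c" by (rule sum_list_cdiv)
  finally show "proj_perp Bs (\<lambda>z. v z / c) z = proj_perp Bs v z / c"
    unfolding proj_perp_def by (simp add: diff_divide_distrib)
qed

lemma nsq_cdiv: "v \<in> H2 \<Longrightarrow> nsq (\<lambda>z. v z / c) = nsq v / (cmod c)\<^sup>2"
proof -
  assume v: "v \<in> H2"
  have "of_real (nsq (\<lambda>z. v z / c)) = h2_inner v v / (c * cnj c)"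
    using v H2_cdiv[OF v] by (simp add: inner_self[symmetric] inner_cdiv_left inner_cdiv_right)
  also have "\<dots> = of_real (nsq v / (cmod c)\<^sup>2)"
    using v by (simp add: inner_self complex_norm_square[symmetric] del: of_real_power)
  finally show ?thesis by (simp only: of_real_eq_iff)
qed

lemma normalize_cdiv:
  assumes v: "v \<in> H2" and c: "c > 0"
  shows "h2_normalize (\<lambda>z. v z / of_real c) = h2_normalize v"
proof -
  have "h2_norm (\<lambda>z. v z / of_real c) = h2_norm v / c"
    using v c H2_cdiv[OF v] by (simp add: h2_norm_nsq nsq_cdiv real_sqrt_divide)
  hence e: "h2_normalize (\<lambda>z. v z / of_real c) = (\<lambda>z. v z / of_real c / of_real (h2_norm v / c))"
    unfolding h2_normalize_def by simp
  show ?thesis unfolding e unfolding h2_normalize_def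
    using c by (cases "h2_norm v = 0") (auto simp: field_simps)
qed

lemma normalize_value:
  assumes f: "f \<in> H2" and v: "v \<in> H2"
  shows "cmod (h2_inner f (h2_normalize v)) = (if nsq v = 0 then 0 else cmod (h2_inner f v) / h2_norm v)"
  unfolding h2_normalize_def using f v null_inner_right[OF v]
  by (auto simp: inner_cdiv_right norm_divide h2_norm_nonneg)

lemma normalize_value_le:
  assumes f: "f \<in> H2" and v: "v \<in> H2"
  shows "cmod (h2_inner f (h2_normalize v)) \<le> h2_norm f"
proof (cases "nsq v = 0")
  case False
  have p: "0 < h2_norm v" using False v nsq_nonneg[OF v] by (simp add: h2_norm_nsq)
  have "cmod (h2_inner f v) / h2_norm v \<le> h2_norm f * h2_norm v / h2_norm v"
    using cauchy_schwarz[OF f v] p by (intro divide_right_mono) auto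
  thus ?thesis using normalize_value[OF f v] False p by simp
qed (use normalize_value[OF f v] h2_norm_nonneg[OF f] in simp)

lemma QE_lower:
  assumes ON: "ON Bs"
  shows "\<exists>N r. r < 1 \<and> (\<forall>n a. cmod a < 1 \<and> (N \<le> n \<or> r < cmod a) \<longrightarrow>
           3/4 \<le> nsq (proj_perp Bs (ekern n a)))"
proof -
  have H: "\<And>B. B \<in> set Bs \<Longrightarrow> B \<in> H2" using ON_H2 ON by auto
  define L where "L = length Bs"
  define \<delta> :: real where "\<delta> = 1 / (real L + 1)"
  have \<delta>: "\<delta> > 0" by (simp add: \<delta>_def)
  obtain N r where r: "r < 1" and Nr: "\<forall>n a. cmod a < 1 \<and> (N \<le> n \<or> r < cmod a) \<longrightarrow>
           (\<forall>h\<in>set Bs. cmod (h2_inner h (ekern n a)) < \<delta>)"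
    using UE_list[OF H \<delta>] by blast
  show ?thesis
  proof (intro exI conjI allI impI)
    show "r < 1" by (rule r)
    fix n a assume na: "cmod a < 1 \<and> (N \<le> n \<or> r < cmod a)"
    hence a: "cmod a < 1" by simp
    have eH: "ekern n a \<in> H2" by (rule ekern_H2[OF a])
    have "(\<Sum>B\<leftarrow>Bs. (cmod (h2_inner (ekern n a) B))\<^sup>2) \<le> (\<Sum>B\<leftarrow>Bs. \<delta>\<^sup>2)"
    proof (rule sum_list_mono)
      fix B assume B: "B \<in> set Bs"
      have "h2_inner (ekern n a) B = cnj (h2_inner B (ekern n a))" using H[OF B] eH by (subst inner_cnj) auto
      hence "cmod (h2_inner (ekern n a) B) < \<delta>" using Nr na B by auto
      thus "(cmod (h2_inner (ekern n a) B))\<^sup>2 \<le> \<delta>\<^sup>2" by (intro power_mono) auto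
    qed
    also have "\<dots> = real L * \<delta>\<^sup>2" by (simp add: sum_list_triv L_def)
    also have "\<dots> \<le> 1/4"
    proof -
      have "4 * real L \<le> (real L + 1)\<^sup>2" using zero_le_power2[of "real L - 1"]
        by (simp add: power2_eq_square algebra_simps)
      thus ?thesis by (simp add: \<delta>_def power_divide field_simps)
    qed
    finally have "(\<Sum>B\<leftarrow>Bs. (cmod (h2_inner (ekern n a) B))\<^sup>2) \<le> 1/4" .
    thus "3/4 \<le> nsq (proj_perp Bs (ekern n a))"
      using nsq_proj[OF ON eH] nsq_ekern[OF a] by simp
  qed
qed

lemma part_i:
  assumes ON: "ON Bs" and f: "f \<in> H2" and e: "\<epsilon> > 0"
  shows "\<exists>N r. r < 1 \<and> (\<forall>n a. cmod a < 1 \<and> (N \<le> n \<or> r < cmod a) \<longrightarrow>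
           cmod (h2_inner f (h2_normalize (proj_perp Bs (ekern n a)))) < \<epsilon>)"
proof -
  have H: "\<And>B. B \<in> set Bs \<Longrightarrow> B \<in> H2" using ON_H2 ON by auto
  define g where "g = proj_perp Bs f"
  have gH: "g \<in> H2" unfolding g_def by (rule proj_H2[OF H f])
  obtain N1 r1 where r1: "r1 < 1" and 1: "\<forall>n a. cmod a < 1 \<and> (N1 \<le> n \<or> r1 < cmod a) \<longrightarrow>
           cmod (h2_inner g (ekern n a)) < \<epsilon>/2"
    using UE[OF gH, of "\<epsilon>/2"] e by auto
  obtain N2 r2 where r2: "r2 < 1" and 2: "\<forall>n a. cmod a < 1 \<and> (N2 \<le> n \<or> r2 < cmod a) \<longrightarrow>
           3/4 \<le> nsq (proj_perp Bs (ekern n a))"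
    using QE_lower[OF ON] by auto
  show ?thesis
  proof (intro exI conjI allI impI)
    show "max r1 r2 < 1" using r1 r2 by simp
    fix n a assume na: "cmod a < 1 \<and> (max N1 N2 \<le> n \<or> max r1 r2 < cmod a)"
    hence a: "cmod a < 1" by simp
    define v where "v = proj_perp Bs (ekern n a)"
    have vH: "v \<in> H2" unfolding v_def by (rule proj_H2[OF H ekern_H2[OF a]])
    have v34: "3/4 \<le> nsq v" using 2 na unfolding v_def by auto
    have gs: "cmod (h2_inner g (ekern n a)) < \<epsilon>/2" using 1 na by auto
    have nv: "1/2 \<le> h2_norm v"
    proof -
      have "sqrt (1/4) \<le> sqrt (nsq v)" using v34 by (intro real_sqrt_le_mono) simp
      moreover have "sqrt (1/4 :: real) = 1/2" by (simp add: real_sqrt_divide)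
      ultimately show ?thesis using vH by (simp add: h2_norm_nsq)
    qed
    have "h2_inner f v = h2_inner g (ekern n a)"
      unfolding v_def g_def using proj_selfadj[OF H f ekern_H2[OF a]] by simp
    hence "cmod (h2_inner f (h2_normalize v)) = cmod (h2_inner g (ekern n a)) / h2_norm v"
      using normalize_value[OF f vH] v34 by simp
    also have "\<dots> \<le> cmod (h2_inner g (ekern n a)) / (1/2)"
      using nv by (intro divide_left_mono) auto
    also have "\<dots> < \<epsilon>" using gs by simp
    finally show "cmod (h2_inner f (h2_normalize (proj_perp Bs (ekern n a)))) < \<epsilon>"
      unfolding v_def .
  qed
qed

lemma VO:
  assumes F: "F holomorphic_on ball 0 1" and b: "cmod b < 1" and z: "\<And>i. i < j \<Longrightarrow> (deriv ^^ i) F b = 0"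
  shows "((\<lambda>a. F a / (a - b)^j) \<longlongrightarrow> (deriv ^^ j) F b / fact j) (at b)"
proof -
  define \<rho> where "\<rho> = 1 - cmod b"
  have \<rho>: "\<rho> > 0" using b by (simp add: \<rho>_def)
  have sub: "ball b \<rho> \<subseteq> ball 0 1"
  proof
    fix x assume "x \<in> ball b \<rho>"
    hence "cmod (x - b) < \<rho>" by (simp add: dist_norm norm_minus_commute)
    moreover have "cmod x \<le> cmod b + cmod (x - b)" by (metis add.commute diff_add_cancel norm_triangle_ineq)
    ultimately show "x \<in> ball 0 1" by (simp add: \<rho>_def)
  qed
  have Fb: "F holomorphic_on ball b \<rho>" using F sub by (rule holomorphic_on_subset)
  define d where "d = (\<lambda>i. (deriv ^^ i) F b / fact i)"
  have ser: "(\<lambda>i. d (i + j) * (a - b)^(i + j)) sums F a" if "a \<in> ball b \<rho>" for a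
  proof -
    have "(\<lambda>i. d i * (a - b)^i) sums F a"
      using holomorphic_power_series[OF Fb that] by (simp add: d_def)
    thus ?thesis by (subst sums_zero_iff_shift) (auto simp: d_def z)
  qed
  define P where "P = (\<lambda>x. \<Sum>i. d (i + j) * x^i)"
  define K :: complex where "K = of_real (\<rho>/2)"
  have K: "cmod K = \<rho>/2" "K \<noteq> 0" using \<rho> by (auto simp: K_def)
  have "b + K \<in> ball b \<rho>" using K \<rho> by (simp add: dist_norm)
  from ser[OF this] have "summable (\<lambda>i. d (i + j) * K^(i + j))" by (simp add: sums_iff)
  hence "summable (\<lambda>i. (d (i + j) * K^(i + j)) / K^j)" by (rule summable_divide)
  hence sK: "summable (\<lambda>i. d (i + j) * K^i)" using K by (simp add: power_add field_simps)
  have cP: "isCont P 0" unfolding P_def by (rule isCont_powser[OF sK]) (use K \<rho> in simp)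
  have P0: "P 0 = d j" by (simp add: P_def)
  have "isCont (\<lambda>a. P (a - b)) b"
    by (rule isCont_o2[where f="\<lambda>a. a - b"]) (use cP in \<open>auto intro!: continuous_intros\<close>)
  hence lim: "((\<lambda>a. P (a - b)) \<longlongrightarrow> d j) (at b)" using P0 by (simp add: isCont_def)
  have ev: "eventually (\<lambda>a. P (a - b) = F a / (a - b)^j) (at b)"
    unfolding eventually_at
  proof (intro exI conjI ballI impI)
    show "\<rho> > 0" by (rule \<rho>)
    fix a :: complex assume "a \<in> UNIV" and a: "a \<noteq> b \<and> dist a b < \<rho>"
    hence ab: "a - b \<noteq> 0" by simp
    have "a \<in> ball b \<rho>" using a by (simp add: dist_commute)
    from ser[OF this] have "(\<lambda>i. (d (i + j) * (a - b)^(i + j)) / (a - b)^j) sums (F a / (a - b)^j)"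
      by (rule sums_divide)
    hence "(\<lambda>i. d (i + j) * (a - b)^i) sums (F a / (a - b)^j)"
      using ab by (simp add: power_add field_simps)
    thus "P (a - b) = F a / (a - b)^j" by (simp add: P_def sums_iff)
  qed
  show ?thesis using Lim_transform_eventually[OF lim ev] by (simp add: d_def)
qed

lemma proj_ekern:
  assumes ON: "ON Bs" and a: "cmod a < 1"
  shows "proj_perp Bs (ekern n a) = (\<lambda>z. proj_perp Bs (kern n a) z / of_real (h2_norm (kern n a)))"
  unfolding ekern_def using ON_H2[OF ON] kern_H2[OF a] by (intro proj_cdiv) auto

lemma exists_nonnull:
  assumes ON: "ON Bs" and b: "cmod b < 1"
  shows "\<exists>m\<ge>n. nsq (proj_perp Bs (kern m b)) \<noteq> 0"
proof -
  obtain N r where "\<forall>n a. cmod a < 1 \<and> (N \<le> n \<or> r < cmod a) \<longrightarrow> 3/4 \<le> nsq (proj_perp Bs (ekern n a))"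
    using QE_lower[OF ON] by auto
  hence 1: "3/4 \<le> nsq (proj_perp Bs (ekern (max N n) b))" using b by auto
  have H: "proj_perp Bs (kern (max N n) b) \<in> H2" using ON_H2[OF ON] kern_H2[OF b] by (intro proj_H2) auto
  have "nsq (proj_perp Bs (kern (max N n) b)) \<noteq> 0"
    using 1 unfolding proj_ekern[OF ON b] nsq_cdiv[OF H] by auto
  thus ?thesis by (intro exI[of _ "max N n"]) auto
qed

lemma hd_repro:
  assumes u: "u \<in> H2" and b: "cmod b < 1"
  shows "(deriv ^^ i) ((deriv ^^ n) u) b = h2_inner u (kern (n+i) b)"
proof -
  have "(deriv ^^ i) ((deriv ^^ n) u) = (deriv ^^ (i+n)) u" by (simp add: funpow_add)
  thus ?thesis using repro[OF u b, of "n+i"] by (simp add: add.commute)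
qed

lemma limsup:
  assumes ON: "ON Bs" and f: "f \<in> H2" and b: "cmod b < 1"
  shows "\<exists>n'. nsq (proj_perp Bs (kern n' b)) \<noteq> 0 \<and>
     (\<forall>\<epsilon>>0. \<exists>\<delta>>0. \<forall>a. cmod a < 1 \<and> cmod (a - b) < \<delta> \<longrightarrow>
        cmod (h2_inner f (h2_normalize (proj_perp Bs (kern n a))))
          < cmod (h2_inner f (h2_normalize (proj_perp Bs (kern n' b)))) + \<epsilon>)"
proof -
  have H: "\<And>B. B \<in> set Bs \<Longrightarrow> B \<in> H2" using ON_H2 ON by auto
  let ?Q = "\<lambda>m a. proj_perp Bs (kern m a)"
  let ?V = "\<lambda>m a. cmod (h2_inner f (h2_normalize (?Q m a)))"
  have QH: "\<And>m a. cmod a < 1 \<Longrightarrow> ?Q m a \<in> H2" using H kern_H2 by (intro proj_H2) auto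
  obtain m where m: "m \<ge> n" "nsq (?Q m b) \<noteq> 0" using exists_nonnull[OF ON b] by blast
  have ex: "\<exists>j. nsq (?Q (n+j) b) \<noteq> 0" using m by (intro exI[of _ "m-n"]) auto
  define j0 where "j0 = (LEAST j. nsq (?Q (n+j) b) \<noteq> 0)"
  have j0: "nsq (?Q (n+j0) b) \<noteq> 0" unfolding j0_def by (rule LeastI_ex[OF ex])
  have below: "\<And>i. i < j0 \<Longrightarrow> nsq (?Q (n+i) b) = 0" unfolding j0_def using not_less_Least by blast
  define n' where "n' = n + j0"
  define h where "h = ?Q n' b"
  have hH: "h \<in> H2" unfolding h_def by (rule QH[OF b])
  have hnz: "nsq h \<noteq> 0" using j0 by (simp add: h_def n'_def)
  have hpos: "0 < nsq h" using hnz nsq_nonneg[OF hH] by simp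
  have hnpos: "0 < h2_norm h" using hpos hH by (simp add: h2_norm_nsq)
  have horth: "\<And>B. B \<in> set Bs \<Longrightarrow> h2_inner h B = 0" unfolding h_def
    using proj_orth[OF ON kern_H2[OF b]] by blast
  define g where "g = proj_perp Bs f"
  have gH: "g \<in> H2" unfolding g_def by (rule proj_H2[OF H f])
  have gorth: "\<And>B. B \<in> set Bs \<Longrightarrow> h2_inner g B = 0" unfolding g_def
    using proj_orth[OF ON f] by blast
  have toQ: "h2_inner x (kern k c) = h2_inner x (?Q k c)"
    if "x \<in> H2" "\<And>B. B \<in> set Bs \<Longrightarrow> h2_inner x B = 0" "cmod c < 1" for x k c
    using orth_inner(2)[OF H that(1) kern_H2[OF that(3)] that(2)] by simp
  define F1 where "F1 = (deriv ^^ n) g"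
  define F2 where "F2 = (deriv ^^ n) h"
  have F1h: "F1 holomorphic_on ball 0 1" unfolding F1_def using H2_hol[OF gH] by (intro holomorphic_higher_deriv) auto
  have F2h: "F2 holomorphic_on ball 0 1" unfolding F2_def using H2_hol[OF hH] by (intro holomorphic_higher_deriv) auto
  have dF1: "(deriv ^^ i) F1 b = h2_inner g (?Q (n+i) b)" for i
    unfolding F1_def hd_repro[OF gH b] using toQ[OF gH gorth b] by simp
  have dF2: "(deriv ^^ i) F2 b = h2_inner h (?Q (n+i) b)" for i
    unfolding F2_def hd_repro[OF hH b] using toQ[OF hH horth b] by simp
  have lim1: "((\<lambda>a. F1 a / (a - b)^j0) \<longlongrightarrow> h2_inner g (?Q n' b) / fact j0) (at b)"
    using VO[OF F1h b, of j0] dF1 below null_inner_right QH[OF b] n'_def by auto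
  have lim2: "((\<lambda>a. F2 a / (a - b)^j0) \<longlongrightarrow> of_real (nsq h) / fact j0) (at b)"
  proof -
    have hh: "h2_inner h (?Q (n+j0) b) = of_real (nsq h)" using inner_self[OF hH] by (simp add: h_def n'_def)
    show ?thesis using VO[OF F2h b, of j0] dF2 below null_inner_right QH[OF b] hh by auto
  qed
  have L2: "of_real (nsq h) / fact j0 \<noteq> (0::complex)" using hnz by simp
  define G where "G = h2_inner g (?Q n' b)"
  define T where "T = cmod (G / fact j0) * h2_norm h / cmod (of_real (nsq h) / fact j0)"
  have limR: "((\<lambda>a. cmod (F1 a / (a - b)^j0) * h2_norm h / cmod (F2 a / (a - b)^j0)) \<longlongrightarrow> T) (at b)"
    unfolding T_def G_def using L2
    by (intro tendsto_intros lim1 lim2) auto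
  have fh: "h2_inner f h = G"
  proof -
    have "h2_inner f h = h2_inner g (kern n' b)"
      unfolding h_def g_def using proj_selfadj[OF H f kern_H2[OF b]] by simp
    thus ?thesis unfolding G_def using toQ[OF gH gorth b] by simp
  qed
  have T_eq: "T = ?V n' b"
  proof -
    have "?V n' b = cmod G / h2_norm h" using normalize_value[OF f hH] hnz fh by (simp add: h_def)
    also have "\<dots> = cmod G * h2_norm h / nsq h"
    proof -
      have "nsq h = h2_norm h * h2_norm h" using h2_norm_sq[OF hH] by (simp add: power2_eq_square)
      thus ?thesis using hnpos by (simp add: field_simps)
    qed
    also have "\<dots> = T" unfolding T_def using hpos by (simp add: norm_divide field_simps)
    finally show ?thesis by simp
  qed
  have T0: "0 \<le> T" unfolding T_def using hnpos by (intro divide_nonneg_nonneg mult_nonneg_nonneg) auto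
  show ?thesis
  proof (intro exI[of _ n'] conjI allI impI)
    show "nsq (?Q n' b) \<noteq> 0" using hnz by (simp add: h_def)
    fix \<epsilon> :: real assume e: "\<epsilon> > 0"
    have ev: "eventually (\<lambda>a. F2 a / (a - b)^j0 \<noteq> 0 \<and>
        cmod (F1 a / (a - b)^j0) * h2_norm h / cmod (F2 a / (a - b)^j0) < T + \<epsilon>) (at b)"
      using tendsto_imp_eventually_ne[OF lim2 L2] order_tendstoD(2)[OF limR, of "T + \<epsilon>"] e
      by (auto elim: eventually_elim2)
    then obtain \<delta> where d: "\<delta> > 0" and dP: "\<And>a. a \<noteq> b \<Longrightarrow> dist a b < \<delta> \<Longrightarrow>
        F2 a / (a - b)^j0 \<noteq> 0 \<and> cmod (F1 a / (a - b)^j0) * h2_norm h / cmod (F2 a / (a - b)^j0) < T + \<epsilon>"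
      unfolding eventually_at by auto
    show "\<exists>\<delta>>0. \<forall>a. cmod a < 1 \<and> cmod (a - b) < \<delta> \<longrightarrow> ?V n a < ?V n' b + \<epsilon>"
    proof (intro exI[of _ \<delta>] conjI allI impI)
      show "\<delta> > 0" by (rule d)
      fix a assume aa: "cmod a < 1 \<and> cmod (a - b) < \<delta>"
      hence a: "cmod a < 1" by simp
      show "?V n a < ?V n' b + \<epsilon>"
      proof (cases "a = b")
        case True
        show ?thesis
        proof (cases "j0 = 0")
          case True
          then show ?thesis using e \<open>a = b\<close> by (simp add: n'_def)
        next
          case False
          hence "nsq (?Q n b) = 0" using below[of 0] by simp
          hence "?V n b = 0" using normalize_value[OF f QH[OF b]] by simp
          then show ?thesis using e \<open>a = b\<close> by (simp add: add_nonneg_pos)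
        qed
      next
        case False
        have P: "F2 a / (a - b)^j0 \<noteq> 0"
          "cmod (F1 a / (a - b)^j0) * h2_norm h / cmod (F2 a / (a - b)^j0) < T + \<epsilon>"
          using dP[OF False] aa by (auto simp: dist_norm)
        have ab: "cmod (a - b) ^ j0 > 0" using False by simp
        have F2nz: "F2 a \<noteq> 0" using P(1) by auto
        have Req: "cmod (F1 a / (a - b)^j0) * h2_norm h / cmod (F2 a / (a - b)^j0)
              = cmod (F1 a) * h2_norm h / cmod (F2 a)"
        proof -
          have y: "cmod ((a - b)^j0) \<noteq> 0" using False by simp
          have gen: "\<And>x y z (c::real). cmod y \<noteq> 0 \<Longrightarrow> cmod (x / y) * c / cmod (z / y) = cmod x * c / cmod z"
            by (simp add: norm_divide field_simps)
          show ?thesis by (rule gen[OF y])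
        qed
        define v where "v = ?Q n a"
        have vH: "v \<in> H2" unfolding v_def by (rule QH[OF a])
        have "?V n a \<le> cmod (F1 a) * h2_norm h / cmod (F2 a)"
        proof (cases "nsq v = 0")
          case True
          hence "?V n a = 0" using normalize_value[OF f vH] by (simp add: v_def)
          thus ?thesis using hnpos by simp
        next
          case False
          have vpos: "0 < h2_norm v" using False nsq_nonneg[OF vH] vH by (simp add: h2_norm_nsq)
          have fv: "h2_inner f v = F1 a"
          proof -
            have "h2_inner f v = h2_inner g (kern n a)"
              unfolding v_def g_def using proj_selfadj[OF H f kern_H2[OF a]] by simp
            thus ?thesis unfolding F1_def using repro[OF gH a] by simp
          qed
          have vh: "h2_inner v h = cnj (F2 a)"
          proof -
            have "h2_inner v h = h2_inner (kern n a) h"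
              unfolding v_def using orth_inner(1)[OF H hH kern_H2[OF a] horth] by simp
            also have "\<dots> = cnj (h2_inner h (kern n a))" using hH kern_H2[OF a] by (rule inner_cnj)
            finally show ?thesis unfolding F2_def using repro[OF hH a] by simp
          qed
          have cs: "cmod (F2 a) \<le> h2_norm v * h2_norm h"
            using cauchy_schwarz[OF vH hH] vh by simp
          have "?V n a = cmod (F1 a) / h2_norm v"
            using normalize_value[OF f vH] False fv by (simp add: v_def)
          also have "\<dots> \<le> cmod (F1 a) / (cmod (F2 a) / h2_norm h)"
            using cs hnpos F2nz vpos by (intro divide_left_mono) (auto simp: field_simps)
          also have "\<dots> = cmod (F1 a) * h2_norm h / cmod (F2 a)" by simp
          finally show ?thesis .
        qed
        thus ?thesis using P(2) Req T_eq by simp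
      qed
    qed
  qed
qed

lemma compact_uniform_gap:
  fixes \<phi> :: "complex \<Rightarrow> real"
  assumes K: "compact K"
    and loc: "\<And>b. b \<in> K \<Longrightarrow> \<exists>\<delta>>0. \<exists>t<S. \<forall>a\<in>K. dist b a < \<delta> \<longrightarrow> \<phi> a \<le> t"
  shows "\<exists>t<S. \<forall>a\<in>K. \<phi> a \<le> t"
proof (cases "K = {}")
  case True
  then show ?thesis by (intro exI[of _ "S - 1"]) auto
next
  case False
  from loc obtain \<delta> t where dt: "\<And>b. b \<in> K \<Longrightarrow> \<delta> b > 0 \<and> t b < S \<and> (\<forall>a\<in>K. dist b a < \<delta> b \<longrightarrow> \<phi> a \<le> t b)"
    by metis
  have cov: "K \<subseteq> (\<Union>b\<in>K. ball b (\<delta> b))" using dt by force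
  obtain C where C: "C \<subseteq> K" "finite C" "K \<subseteq> (\<Union>b\<in>C. ball b (\<delta> b))"
    by (rule compactE_image[OF K _ cov]) auto
  have Cne: "C \<noteq> {}" using C False by auto
  define t0 where "t0 = Max (t ` C)"
  have "t0 \<in> t ` C" unfolding t0_def using C Cne by (intro Max_in) auto
  hence t0S: "t0 < S" using C dt by auto
  show ?thesis
  proof (intro exI[of _ t0] conjI ballI)
    show "t0 < S" by (rule t0S)
    fix a assume a: "a \<in> K"
    then obtain c where c: "c \<in> C" "a \<in> ball c (\<delta> c)" using C by auto
    hence "\<phi> a \<le> t c" using dt[of c] C a by auto
    also have "t c \<le> t0" unfolding t0_def using C c by (intro Max_ge) auto
    finally show "\<phi> a \<le> t0" .
  qed
qed

lemma finite_gap: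
  fixes \<phi> :: "nat \<Rightarrow> complex \<Rightarrow> real"
  assumes "\<And>n. n < N \<Longrightarrow> \<exists>t<S. \<forall>a\<in>K. \<phi> n a \<le> t"
  shows "\<exists>t<S. \<forall>n<N. \<forall>a\<in>K. \<phi> n a \<le> t"
  using assms
proof (induction N)
  case 0
  then show ?case by (intro exI[of _ "S - 1"]) auto
next
  case (Suc N)
  obtain t1 where t1: "t1 < S" "\<forall>n<N. \<forall>a\<in>K. \<phi> n a \<le> t1" using Suc by auto
  obtain t2 where t2: "t2 < S" "\<forall>a\<in>K. \<phi> N a \<le> t2" using Suc.prems[of N] by auto
  show ?case
  proof (intro exI[of _ "max t1 t2"] conjI allI impI ballI)
    show "max t1 t2 < S" using t1 t2 by simp
    fix n a assume "n < Suc N" "a \<in> K"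
    thus "\<phi> n a \<le> max t1 t2" using t1(2) t2(2) by (cases "n = N") (force simp: less_Suc_eq le_max_iff_disj)+
  qed
qed

theorem theorem6:
  fixes ps :: "(nat \<times> complex) list" and f :: "complex \<Rightarrow> complex"
  assumes "distinct ps"
    and "\<forall>p\<in>set ps. cmod (snd p) < 1"
    and "f \<in> H2"
  shows "(\<forall>\<epsilon>>0. \<exists>N r. r < 1 \<and>
            (\<forall>n a. cmod a < 1 \<and> (n, a) \<notin> set ps \<and> (N \<le> n \<or> r < cmod a) \<longrightarrow>
                   cmod (h2_inner f (Bm ps n a)) < \<epsilon>))
       \<and> (\<exists>nm am. cmod am < 1 \<and> (nm, am) \<notin> set ps \<and>
            cmod (h2_inner f (Bm ps nm am)) =
              (SUP p\<in>{(n, a). cmod a < 1 \<and> (n, a) \<notin> set ps}. cmod (h2_inner f (Bm ps (fst p) (snd p)))))"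
proof -
  note f = assms(3)
  define Bs where "Bs = gs_rev (rev ps)"
  have gp: "ON Bs \<and> (\<forall>p\<in>set (rev ps). nsq (proj_perp Bs (ekern (fst p) (snd p))) = 0)"
    unfolding Bs_def by (rule gs_prop) (use assms(2) in auto)
  hence ON: "ON Bs" and Z: "\<And>p. p \<in> set ps \<Longrightarrow> nsq (proj_perp Bs (ekern (fst p) (snd p))) = 0"
    by auto
  have H: "\<And>B. B \<in> set Bs \<Longrightarrow> B \<in> H2" using ON_H2 ON by auto
  have Bm_e: "\<And>n a. Bm ps n a = h2_normalize (proj_perp Bs (ekern n a))"
    by (simp add: Bm_def gram_schmidt_def proj_rev Bs_def)
  have QkH: "\<And>n a. cmod a < 1 \<Longrightarrow> proj_perp Bs (kern n a) \<in> H2"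
    using H kern_H2 by (intro proj_H2) auto
  have Bm_k: "Bm ps n a = h2_normalize (proj_perp Bs (kern n a))" if a: "cmod a < 1" for n a
    unfolding Bm_e proj_ekern[OF ON a] using normalize_cdiv[OF QkH[OF a] kern_norm_pos[OF a]] .
  have Zk: "nsq (proj_perp Bs (kern (fst p) (snd p))) = 0" if p: "p \<in> set ps" for p
  proof -
    have a: "cmod (snd p) < 1" using assms(2) p by auto
    have "nsq (proj_perp Bs (kern (fst p) (snd p))) / (cmod (of_real (h2_norm (kern (fst p) (snd p))) :: complex))\<^sup>2 = 0"
      using Z[OF p] unfolding proj_ekern[OF ON a] nsq_cdiv[OF QkH[OF a]] .
    thus ?thesis using kern_norm_pos[OF a, of "fst p"] by simp
  qed
  have part1: "\<forall>\<epsilon>>0. \<exists>N r. r < 1 \<and>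
            (\<forall>n a. cmod a < 1 \<and> (n, a) \<notin> set ps \<and> (N \<le> n \<or> r < cmod a) \<longrightarrow>
                   cmod (h2_inner f (Bm ps n a)) < \<epsilon>)"
  proof (intro allI impI)
    fix \<epsilon> :: real assume e: "\<epsilon> > 0"
    from part_i[OF ON f e] obtain N r where "r < 1" "\<forall>n a. cmod a < 1 \<and> (N \<le> n \<or> r < cmod a) \<longrightarrow>
           cmod (h2_inner f (h2_normalize (proj_perp Bs (ekern n a)))) < \<epsilon>" by blast
    thus "\<exists>N r. r < 1 \<and> (\<forall>n a. cmod a < 1 \<and> (n, a) \<notin> set ps \<and> (N \<le> n \<or> r < cmod a) \<longrightarrow>
                   cmod (h2_inner f (Bm ps n a)) < \<epsilon>)"
      unfolding Bm_e by (intro exI[of _ N] exI[of _ r]) simp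
  qed
  define D where "D = {(n, a). cmod a < 1 \<and> (n, a) \<notin> set ps}"
  let ?w = "\<lambda>p. cmod (h2_inner f (Bm ps (fst p) (snd p)))"
  define S where "S = (SUP p\<in>D. ?w p)"
  define n0 where "n0 = Suc (Max (insert 0 (fst ` set ps)))"
  have n0: "n0 \<notin> fst ` set ps"
  proof
    assume "n0 \<in> fst ` set ps"
    hence "n0 \<le> Max (insert 0 (fst ` set ps))" by (intro Max_ge) auto
    thus False by (simp add: n0_def)
  qed
  have n0D: "(n0, 0) \<in> D" unfolding D_def using n0 by force
  hence Dne: "D \<noteq> {}" by auto
  have wle: "?w p \<le> h2_norm f" if p: "p \<in> D" for p
  proof -
    have a: "cmod (snd p) < 1" using p by (auto simp: D_def)
    show ?thesis unfolding Bm_e by (intro normalize_value_le f proj_H2 H ekern_H2 a)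
  qed
  have bdd: "bdd_above (?w ` D)" using wle by (intro bdd_aboveI2) auto
  have wS: "p \<in> D \<Longrightarrow> ?w p \<le> S" for p unfolding S_def by (rule cSUP_upper[OF _ bdd])
  have S0: "0 \<le> S"
  proof -
    have "?w (n0, 0) \<le> S" by (rule wS[OF n0D])
    moreover have "0 \<le> ?w (n0, 0)" by (rule norm_ge_zero)
    ultimately show ?thesis by linarith
  qed
  have ex: "\<exists>p\<in>D. S \<le> ?w p"
  proof (cases "S = 0")
    case True
    then show ?thesis using n0D by auto
  next
    case False
    hence Spos: "S > 0" using S0 by simp
    show ?thesis
    proof (rule ccontr)
      assume "\<not> (\<exists>p\<in>D. S \<le> ?w p)"
      hence lt: "\<And>p. p \<in> D \<Longrightarrow> ?w p < S" by force
      have S2: "S/2 > 0" using Spos by simp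
      from part1[rule_format, OF S2] obtain N r where r: "r < 1" and Nr: "\<forall>n a. cmod a < 1 \<and> (n, a) \<notin> set ps \<and> (N \<le> n \<or> r < cmod a) \<longrightarrow>
                   cmod (h2_inner f (Bm ps n a)) < S/2"
        by blast
      define \<phi> where "\<phi> = (\<lambda>n a. cmod (h2_inner f (h2_normalize (proj_perp Bs (kern n a)))))"
      define K where "K = cball (0::complex) r"
      have Kin: "\<And>a. a \<in> K \<Longrightarrow> cmod a < 1" using r by (auto simp: K_def)
      have gapn: "\<exists>t<S. \<forall>a\<in>K. \<phi> n a \<le> t" for n
      proof (rule compact_uniform_gap)
        show "compact K" by (simp add: K_def)
        fix b assume bK: "b \<in> K"
        have b: "cmod b < 1" by (rule Kin[OF bK])
        obtain n' where n': "nsq (proj_perp Bs (kern n' b)) \<noteq> 0"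
          and lim: "\<forall>\<epsilon>>0. \<exists>\<delta>>0. \<forall>a. cmod a < 1 \<and> cmod (a - b) < \<delta> \<longrightarrow> \<phi> n a < \<phi> n' b + \<epsilon>"
          using limsup[OF ON f b, of n] unfolding \<phi>_def by blast
        have "(n', b) \<notin> set ps" using Zk[of "(n', b)"] n' by auto
        hence "(n', b) \<in> D" using b by (simp add: D_def)
        hence ltS: "\<phi> n' b < S" using lt[of "(n', b)"] Bm_k[OF b] by (simp add: \<phi>_def)
        have hp: "(S - \<phi> n' b)/2 > 0" using ltS by simp
        from lim[rule_format, OF hp] obtain \<delta> where d: "\<delta> > 0" and dd: "\<forall>a. cmod a < 1 \<and> cmod (a - b) < \<delta> \<longrightarrow> \<phi> n a < \<phi> n' b + (S - \<phi> n' b)/2"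
          by blast
        have "\<forall>a\<in>K. dist b a < \<delta> \<longrightarrow> \<phi> n a \<le> \<phi> n' b + (S - \<phi> n' b)/2"
          using dd Kin by (auto simp: dist_norm norm_minus_commute intro: less_imp_le)
        moreover have "\<phi> n' b + (S - \<phi> n' b)/2 < S" using ltS by (simp add: field_simps)
        ultimately show "\<exists>\<delta>>0. \<exists>t<S. \<forall>a\<in>K. dist b a < \<delta> \<longrightarrow> \<phi> n a \<le> t"
          using d by blast
      qed
      obtain t where t: "t < S" "\<forall>n<N. \<forall>a\<in>K. \<phi> n a \<le> t"
        using finite_gap[of N S K \<phi>] gapn by blast
      have "\<forall>p\<in>D. ?w p \<le> max (S/2) t"
      proof
        fix p assume p: "p \<in> D"
        obtain n a where pna: "p = (n, a)" by (cases p)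
        have a: "cmod a < 1" and nps: "(n, a) \<notin> set ps" using p pna by (auto simp: D_def)
        show "?w p \<le> max (S/2) t"
        proof (cases "N \<le> n \<or> r < cmod a")
          case True
          hence "?w p < S/2" using Nr a nps pna by auto
          thus ?thesis by simp
        next
          case False
          hence "n < N" "a \<in> K" by (auto simp: K_def)
          hence "\<phi> n a \<le> t" using t by auto
          thus ?thesis using pna Bm_k[OF a] by (simp add: \<phi>_def)
        qed
      qed
      hence "S \<le> max (S/2) t" unfolding S_def by (intro cSUP_least Dne) auto
      thus False using t Spos by simp
    qed
  qed
  then obtain p where p: "p \<in> D" "S \<le> ?w p" by blast
  have "?w p = S" using p wS[OF p(1)] by simp
  moreover obtain nm am where "p = (nm, am)" by (cases p)
  ultimately have "cmod am < 1 \<and> (nm, am) \<notin> set ps \<and> cmod (h2_inner f (Bm ps nm am)) = S"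
    using p(1) by (auto simp: D_def)
  hence part2: "\<exists>nm am. cmod am < 1 \<and> (nm, am) \<notin> set ps \<and>
            cmod (h2_inner f (Bm ps nm am)) =
              (SUP p\<in>{(n, a). cmod a < 1 \<and> (n, a) \<notin> set ps}. cmod (h2_inner f (Bm ps (fst p) (snd p))))"
    unfolding S_def D_def by blast
  show ?thesis using part1 part2 by blast
qed

end
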